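(* Let $[X,d,m]$ be a metric random walk space with invariant and reversible probability measure $\nu$, and assume $\Delta_m$ is ergodic. Then: (1) for $K>0$ and $n\in(1,\infty)$, $\Delta_m$ satisfies the integrated Bakry-Émery condition $IBE(K,n)$ if and only if a Poincaré inequality with constant $K\frac{n}{n-1}$ holds; (2) for $K>0$, $\Delta_m$ satisfies $IBE(K,\infty)$ if and only if a Poincaré inequality with constant $K$ holds. Consequently, if $\Delta_m$ satisfies the Bakry-Émery condition $BE(K,n)$ with $K>0$, then ${\rm gap}(-\Delta_m)\ge K\frac n{n-1}$; and if $\Delta_m$ satisfies $BE(K,\infty)$ with $K>0$, then ${\rm gap}(-\Delta_m)\ge K$.
   Context: A metric random walk space $[X,d,m]$ is a Polish metric space $(X,d)$ with a family $m=(m_x)_{x\in X}$ of Borel probability measures, $x\mapsto m_x(A)$ Borel measurable, each with finite first moment. A Radon measure $\nu$ is invariant if $\nu(A)=\int_X m_x(A)d\nu(x)$ for all $\nu$-measurable $A$, reversible if $dm_x(y)d\nu(x)=dm_y(x)d\nu(y)$. $\Delta_m f(x)=\int_X(f(y)-f(x))dm_x(y)$; $\Delta_m$ is ergodic if $\Delta_m u=0$ implies $u$ is $\nu$-a.e. constant. $\mathcal H_m(f)=\frac12\iint(f(y)-f(x))^2dm_x(y)d\nu(x)$, ${\rm Var}_\nu(f)=\int_X(f-\int fd\nu)^2d\nu$, ${\rm gap}(-\Delta_m)=\inf\{\mathcal H_m(f)/{\rm Var}_\nu(f):{\rm Var}_\nu(f)\ne0\}$. A Poincaré inequality with constant $\lambda$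 means $\lambda{\rm Var}_\nu(f)\le\mathcal H_m(f)$ for all $f\in L^2(X,\nu)$. Carré du champ: $\Gamma(f,g)=\frac12(\Delta_m(fg)-f\Delta_m g-g\Delta_m f)$, $\Gamma(f)=\Gamma(f,f)$, $\Gamma_2(f)=\frac12\Delta_m\Gamma(f)-\Gamma(f,\Delta_m f)$. $BE(K,n)$: $\Gamma_2(f)\ge\frac1n(\Delta_m f)^2+K\Gamma(f)$ for all $f\in L^2(X,\nu)$; $BE(K,\infty)$: $\Gamma_2(f)\ge K\Gamma(f)$ for all $f\in L^2(X,\nu)$. $IBE(K,n)$: $K\frac n{n-1}\mathcal H_m(f)\le\int_X(\Delta_m f)^2d\nu$ for all $f\in L^2(X,\nu)$; $IBE(K,\infty)$: $K\mathcal H_m(f)\le\int_X(\Delta_m f)^2d\nu$ for all $f\in L^2(X,\nu)$. *)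

theory Defs
  imports "HOL-Probability.Probability"
begin

definition mrw_space :: "('a::polish_space \<Rightarrow> 'a measure) \<Rightarrow> bool" where
  "mrw_space m \<longleftrightarrow>
     (\<forall>x. prob_space (m x) \<and> sets (m x) = sets borel) \<and>
     (\<forall>A \<in> sets borel. (\<lambda>x. emeasure (m x) A) \<in> borel_measurable borel) \<and>
     (\<forall>x. integrable (m x) (\<lambda>y. dist x y))"

definition invariant_measure :: "('a::polish_space \<Rightarrow> 'a measure) \<Rightarrow> 'a measure \<Rightarrow> bool" where
  "invariant_measure m \<nu> \<longleftrightarrow>
     (\<forall>A \<in> sets \<nu>. emeasure \<nu> A = (\<integral>\<^sup>+ x. emeasure (m x) A \<partial>\<nu>))"

text \<open>Reversibility dm_x(y)d\<nu>(x) = dm_y(x)d\<nu>(y), tested on measurable rectangles A \<times> B.\<close>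
definition reversible_measure :: "('a::polish_space \<Rightarrow> 'a measure) \<Rightarrow> 'a measure \<Rightarrow> bool" where
  "reversible_measure m \<nu> \<longleftrightarrow>
     (\<forall>A \<in> sets \<nu>. \<forall>B \<in> sets \<nu>.
        (\<integral>\<^sup>+ x. indicator A x * emeasure (m x) B \<partial>\<nu>) =
        (\<integral>\<^sup>+ y. indicator B y * emeasure (m y) A \<partial>\<nu>))"

definition L2 :: "'a measure \<Rightarrow> ('a \<Rightarrow> real) set" where
  "L2 \<nu> = {f. f \<in> borel_measurable \<nu> \<and> integrable \<nu> (\<lambda>x. (f x)^2)}"

definition laplacian :: "('a \<Rightarrow> 'a measure) \<Rightarrow> ('a \<Rightarrow> real) \<Rightarrow> 'a \<Rightarrow> real" where
  "laplacian m f x = (\<integral> y. (f y - f x) \<partial>(m x))"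

definition ergodic :: "('a \<Rightarrow> 'a measure) \<Rightarrow> 'a measure \<Rightarrow> bool" where
  "ergodic m \<nu> \<longleftrightarrow>
     (\<forall>u \<in> L2 \<nu>. (AE x in \<nu>. laplacian m u x = 0) \<longrightarrow> (\<exists>c. AE x in \<nu>. u x = c))"

definition H_m :: "('a \<Rightarrow> 'a measure) \<Rightarrow> 'a measure \<Rightarrow> ('a \<Rightarrow> real) \<Rightarrow> real" where
  "H_m m \<nu> f = 1/2 * (\<integral> x. (\<integral> y. (f y - f x)^2 \<partial>(m x)) \<partial>\<nu>)"

definition Var :: "'a measure \<Rightarrow> ('a \<Rightarrow> real) \<Rightarrow> real" where
  "Var \<nu> f = (\<integral> x. (f x - (\<integral> z. f z \<partial>\<nu>))^2 \<partial>\<nu>)"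

text \<open>Spectral gap, as an extended real (infimum of the empty set is +\<infinity>).\<close>
definition gap :: "('a \<Rightarrow> 'a measure) \<Rightarrow> 'a measure \<Rightarrow> ereal" where
  "gap m \<nu> = (INF f \<in> {f \<in> L2 \<nu>. Var \<nu> f \<noteq> 0}. ereal (H_m m \<nu> f / Var \<nu> f))"

definition poincare :: "('a \<Rightarrow> 'a measure) \<Rightarrow> 'a measure \<Rightarrow> real \<Rightarrow> bool" where
  "poincare m \<nu> lam \<longleftrightarrow> (\<forall>f \<in> L2 \<nu>. lam * Var \<nu> f \<le> H_m m \<nu> f)"

definition Gamma :: "('a \<Rightarrow> 'a measure) \<Rightarrow> ('a \<Rightarrow> real) \<Rightarrow> ('a \<Rightarrow> real) \<Rightarrow> 'a \<Rightarrow> real" where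
  "Gamma m f g x = 1/2 * (laplacian m (\<lambda>z. f z * g z) x - f x * laplacian m g x - g x * laplacian m f x)"

definition Gamma2 :: "('a \<Rightarrow> 'a measure) \<Rightarrow> ('a \<Rightarrow> real) \<Rightarrow> 'a \<Rightarrow> real" where
  "Gamma2 m f x = 1/2 * laplacian m (Gamma m f f) x - Gamma m f (laplacian m f) x"

definition BE :: "('a \<Rightarrow> 'a measure) \<Rightarrow> 'a measure \<Rightarrow> real \<Rightarrow> real \<Rightarrow> bool" where
  "BE m \<nu> K n \<longleftrightarrow> (\<forall>f \<in> L2 \<nu>. AE x in \<nu>.
      Gamma2 m f x \<ge> 1/n * (laplacian m f x)^2 + K * Gamma m f f x)"

definition BE_inf :: "('a \<Rightarrow> 'a measure) \<Rightarrow> 'a measure \<Rightarrow> real \<Rightarrow> bool" where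
  "BE_inf m \<nu> K \<longleftrightarrow> (\<forall>f \<in> L2 \<nu>. AE x in \<nu>. Gamma2 m f x \<ge> K * Gamma m f f x)"

definition IBE :: "('a \<Rightarrow> 'a measure) \<Rightarrow> 'a measure \<Rightarrow> real \<Rightarrow> real \<Rightarrow> bool" where
  "IBE m \<nu> K n \<longleftrightarrow> (\<forall>f \<in> L2 \<nu>.
      K * (n / (n - 1)) * H_m m \<nu> f \<le> (\<integral> x. (laplacian m f x)^2 \<partial>\<nu>))"

definition IBE_inf :: "('a \<Rightarrow> 'a measure) \<Rightarrow> 'a measure \<Rightarrow> real \<Rightarrow> bool" where
  "IBE_inf m \<nu> K \<longleftrightarrow> (\<forall>f \<in> L2 \<nu>. K * H_m m \<nu> f \<le> (\<integral> x. (laplacian m f x)^2 \<partial>\<nu>))"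

end

theory Submission
  imports Defs
begin

locale mrw =
  fixes m :: "'a::polish_space \<Rightarrow> 'a measure" and \<nu> :: "'a measure"
  assumes mrw: "mrw_space m" and prob: "prob_space \<nu>" and sets_nu: "sets \<nu> = sets borel"
    and inv: "invariant_measure m \<nu>" and rev: "reversible_measure m \<nu>"
begin

lemma m_prob: "prob_space (m x)" using mrw unfolding mrw_space_def by auto
lemma sets_m[measurable_cong]: "sets (m x) = sets borel" using mrw unfolding mrw_space_def by auto
lemma space_m[simp]: "space (m x) = UNIV"
  using sets_eq_imp_space_eq[OF sets_m] by simp
lemma space_nu[simp]: "space \<nu> = UNIV"
  using sets_eq_imp_space_eq[OF sets_nu] by simp
lemma meas_nu[simp]: "measurable \<nu> N = measurable borel N"
  by (rule measurable_cong_sets[OF sets_nu refl])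
lemma meas_m[simp]: "measurable (m x) N = measurable borel N"
  by (rule measurable_cong_sets[OF sets_m refl])

lemma K[measurable]: "m \<in> borel \<rightarrow>\<^sub>M subprob_algebra borel"
proof (rule measurable_subprob_algebra)
  fix a show "subprob_space (m a)" using m_prob[of a] by (simp add: prob_space_imp_subprob_space)
  show "sets (m a) = sets borel" by (rule sets_m)
next
  fix A :: "'a set" assume "A \<in> sets borel"
  then show "(\<lambda>a. emeasure (m a) A) \<in> borel_measurable borel"
    using mrw unfolding mrw_space_def by auto
qed

lemma bind_nu: "\<nu> \<bind> m = \<nu>"
proof (rule measure_eqI)
  show "sets (\<nu> \<bind> m) = sets \<nu>"
    by (subst sets_bind[where N=borel]) (auto simp: sets_nu sets_m)
  fix A assume A: "A \<in> sets (\<nu> \<bind> m)"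
  then have A': "A \<in> sets borel" by (subst (asm) sets_bind[where N=borel]) (auto simp: sets_m)
  have "emeasure (\<nu> \<bind> m) A = \<integral>\<^sup>+x. emeasure (m x) A \<partial>\<nu>"
    by (rule emeasure_bind[where N=borel]) (auto simp: A' K measurable_cong_sets[OF sets_nu refl])
  also have "\<dots> = emeasure \<nu> A" using inv A' sets_nu unfolding invariant_measure_def by auto
  finally show "emeasure (\<nu> \<bind> m) A = emeasure \<nu> A" .
qed

lemma NI: assumes [measurable]: "f \<in> borel_measurable borel"
  shows "(\<integral>\<^sup>+x. \<integral>\<^sup>+y. f y \<partial>m x \<partial>\<nu>) = (\<integral>\<^sup>+x. f x \<partial>\<nu>)"
proof -
  have "(\<integral>\<^sup>+x. f x \<partial>(\<nu> \<bind> m)) = (\<integral>\<^sup>+x. \<integral>\<^sup>+y. f y \<partial>m x \<partial>\<nu>)"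
    by (rule nn_integral_bind[where B=borel]) (auto)
  then show ?thesis by (simp add: bind_nu)
qed

end

context mrw begin

lemma UNIV_pair[measurable]: "UNIV \<in> sets (borel \<Otimes>\<^sub>M borel)"
proof -
  have "space (borel \<Otimes>\<^sub>M borel) = UNIV" by (simp add: space_pair_measure)
  then show ?thesis by (metis sets.top)
qed

definition kp :: "'a \<Rightarrow> ('a \<times> 'a) measure" where
  "kp x = distr (m x) (borel \<Otimes>\<^sub>M borel) (\<lambda>y. (x, y))"

lemma kp_meas[measurable]: "kp \<in> borel \<rightarrow>\<^sub>M subprob_algebra (borel \<Otimes>\<^sub>M borel)"
  unfolding kp_def by (rule measurable_distr2[OF _ K]) simp

definition \<pi> :: "('a \<times> 'a) measure" where "\<pi> = \<nu> \<bind> kp"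

lemma sets_pi[measurable_cong]: "sets \<pi> = sets (borel \<Otimes>\<^sub>M borel)"
  unfolding \<pi>_def by (subst sets_bind[where N="borel \<Otimes>\<^sub>M borel"]) (auto simp: kp_def)

lemma space_pi[simp]: "space \<pi> = UNIV"
  using sets_eq_imp_space_eq[OF sets_pi] by (simp add: space_pair_measure)

lemma meas_pi[simp]: "measurable \<pi> N = measurable (borel \<Otimes>\<^sub>M borel) N"
  by (rule measurable_cong_sets[OF sets_pi refl])

lemma PI: assumes [measurable]: "G \<in> borel_measurable (borel \<Otimes>\<^sub>M borel)"
  shows "(\<integral>\<^sup>+z. G z \<partial>\<pi>) = (\<integral>\<^sup>+x. \<integral>\<^sup>+y. G (x, y) \<partial>m x \<partial>\<nu>)"
proof -
  have "(\<integral>\<^sup>+z. G z \<partial>\<pi>) = (\<integral>\<^sup>+x. \<integral>\<^sup>+z. G z \<partial>kp x \<partial>\<nu>)"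
    unfolding \<pi>_def by (rule nn_integral_bind[where B="borel \<Otimes>\<^sub>M borel"]) auto
  also have "\<dots> = (\<integral>\<^sup>+x. \<integral>\<^sup>+y. G (x, y) \<partial>m x \<partial>\<nu>)"
    unfolding kp_def by (intro nn_integral_cong, subst nn_integral_distr) auto
  finally show ?thesis .
qed

lemma emeasure_pi_rect: assumes [measurable]: "A \<in> sets borel" "B \<in> sets borel"
  shows "emeasure \<pi> (A \<times> B) = (\<integral>\<^sup>+x. indicator A x * emeasure (m x) B \<partial>\<nu>)"
proof -
  have "emeasure \<pi> (A \<times> B) = (\<integral>\<^sup>+z. indicator (A \<times> B) z \<partial>\<pi>)"
    by (subst nn_integral_indicator) (auto simp: sets_pi)
  also have "\<dots> = (\<integral>\<^sup>+x. \<integral>\<^sup>+y. indicator A x * indicator B y \<partial>m x \<partial>\<nu>)"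
    by (subst PI) (auto simp: indicator_times)
  also have "\<dots> = (\<integral>\<^sup>+x. indicator A x * emeasure (m x) B \<partial>\<nu>)"
    by (intro nn_integral_cong) (simp add: nn_integral_cmult sets_m)
  finally show ?thesis .
qed

lemma pi_swap: "distr \<pi> (borel \<Otimes>\<^sub>M borel) (\<lambda>(x, y). (y, x)) = \<pi>"
proof (rule measure_eqI_generator_eq[where E="{a \<times> b | a b. a \<in> sets borel \<and> b \<in> sets borel}"
      and \<Omega>=UNIV and A="\<lambda>_. UNIV"])
  show "Int_stable {a \<times> b |a b. a \<in> sets borel \<and> b \<in> sets borel}"
    by (rule Int_stable_pair_measure_generator)
  show "{a \<times> b |a b. a \<in> sets borel \<and> b \<in> sets borel} \<subseteq> Pow UNIV" by auto
  show "sets (distr \<pi> (borel \<Otimes>\<^sub>M borel) (\<lambda>(x, y). (y, x))) =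
    sigma_sets UNIV {a \<times> b |a b. a \<in> sets borel \<and> b \<in> sets borel}"
    by (simp add: sets_pair_measure)
  show "sets \<pi> = sigma_sets UNIV {a \<times> b |a b. a \<in> sets borel \<and> b \<in> sets borel}"
    by (simp add: sets_pi sets_pair_measure)
  have "(UNIV::('a\<times>'a) set) = UNIV \<times> UNIV \<and> (UNIV::'a set) \<in> sets borel" by simp
  then show "range (\<lambda>_. UNIV) \<subseteq> {a \<times> b |a b. a \<in> sets (borel::'a measure) \<and> b \<in> sets (borel::'a measure)}"
    by blast
  show "(\<Union>i. UNIV) = UNIV" by simp
  have "emeasure (distr \<pi> (borel \<Otimes>\<^sub>M borel) (\<lambda>(x, y). (y, x))) UNIV = emeasure \<pi> UNIV"
    by (subst emeasure_distr) (auto simp: space_pair_measure)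
  also have "\<dots> = emeasure \<pi> (UNIV \<times> UNIV)" by simp
  also have "\<dots> = (\<integral>\<^sup>+x. 1 \<partial>\<nu>)"
    by (subst emeasure_pi_rect) (auto intro!: nn_integral_cong simp: prob_space.emeasure_space_1[OF m_prob, simplified])
  also have "\<dots> = 1" using prob_space.emeasure_space_1[OF prob] by simp
  finally show "\<And>i. emeasure (distr \<pi> (borel \<Otimes>\<^sub>M borel) (\<lambda>(x, y). (y, x))) UNIV \<noteq> \<infinity>" by simp
  fix X :: "('a \<times> 'a) set" assume "X \<in> {a \<times> b |a b. a \<in> sets borel \<and> b \<in> sets borel}"
  then obtain a b where X: "X = a \<times> b" and [measurable]: "a \<in> sets borel" "b \<in> sets borel" by auto
  have "emeasure (distr \<pi> (borel \<Otimes>\<^sub>M borel) (\<lambda>(x, y). (y, x))) X = emeasure \<pi> (b \<times> a)"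
    by (subst emeasure_distr) (auto simp: X intro!: arg_cong[where f="emeasure \<pi>"])
  also have "\<dots> = (\<integral>\<^sup>+x. indicator b x * emeasure (m x) a \<partial>\<nu>)" by (simp add: emeasure_pi_rect)
  also have "\<dots> = (\<integral>\<^sup>+x. indicator a x * emeasure (m x) b \<partial>\<nu>)"
    using rev unfolding reversible_measure_def by (simp add: sets_nu)
  also have "\<dots> = emeasure \<pi> X" by (simp add: emeasure_pi_rect X)
  finally show "emeasure (distr \<pi> (borel \<Otimes>\<^sub>M borel) (\<lambda>(x, y). (y, x))) X = emeasure \<pi> X" .
qed

lemma PS: assumes [measurable]: "G \<in> borel_measurable (borel \<Otimes>\<^sub>M borel)"
  shows "(\<integral>\<^sup>+z. G (snd z, fst z) \<partial>\<pi>) = (\<integral>\<^sup>+z. G z \<partial>\<pi>)"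
proof -
  have "(\<integral>\<^sup>+z. G z \<partial>\<pi>) = (\<integral>\<^sup>+z. G z \<partial>distr \<pi> (borel \<Otimes>\<^sub>M borel) (\<lambda>(x, y). (y, x)))"
    by (simp add: pi_swap)
  also have "\<dots> = (\<integral>\<^sup>+z. G (snd z, fst z) \<partial>\<pi>)"
    by (subst nn_integral_distr) (auto simp: case_prod_beta)
  finally show ?thesis by simp
qed

lemma marg_snd: "distr \<pi> borel snd = \<nu>"
proof (rule measure_eqI)
  show "sets (distr \<pi> borel snd) = sets \<nu>" by (simp add: sets_nu)
  fix A assume A: "A \<in> sets (distr \<pi> borel snd)"
  then have [measurable]: "A \<in> sets borel" by simp
  have S: "snd -` A \<in> sets \<pi>" using measurable_sets[of snd \<pi> borel A] by simp
  have "emeasure (distr \<pi> borel snd) A = emeasure \<pi> (snd -` A)"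
    by (subst emeasure_distr) auto
  also have "\<dots> = (\<integral>\<^sup>+z. indicator (snd -` A) z \<partial>\<pi>)" using S by simp
  also have "\<dots> = (\<integral>\<^sup>+z. indicator A (snd z) \<partial>\<pi>)" by (auto intro!: nn_integral_cong split: split_indicator)
  also have "\<dots> = (\<integral>\<^sup>+x. \<integral>\<^sup>+y. indicator A y \<partial>m x \<partial>\<nu>)" by (subst PI) auto
  also have "\<dots> = (\<integral>\<^sup>+x. indicator A x \<partial>\<nu>)" by (rule NI) auto
  also have "\<dots> = emeasure \<nu> A" by (simp add: sets_nu)
  finally show "emeasure (distr \<pi> borel snd) A = emeasure \<nu> A" .
qed

lemma marg_fst: "distr \<pi> borel fst = \<nu>"
proof (rule measure_eqI)
  show "sets (distr \<pi> borel fst) = sets \<nu>" by (simp add: sets_nu)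
  fix A assume A: "A \<in> sets (distr \<pi> borel fst)"
  then have [measurable]: "A \<in> sets borel" by simp
  have S: "fst -` A \<in> sets \<pi>" using measurable_sets[of fst \<pi> borel A] by simp
  have "emeasure (distr \<pi> borel fst) A = emeasure \<pi> (fst -` A)"
    by (subst emeasure_distr) auto
  also have "\<dots> = (\<integral>\<^sup>+z. indicator (fst -` A) z \<partial>\<pi>)" using S by simp
  also have "\<dots> = (\<integral>\<^sup>+z. indicator A (fst z) \<partial>\<pi>)" by (auto intro!: nn_integral_cong split: split_indicator)
  also have "\<dots> = (\<integral>\<^sup>+x. \<integral>\<^sup>+y. indicator A x \<partial>m x \<partial>\<nu>)" by (subst PI) auto
  also have "\<dots> = (\<integral>\<^sup>+x. indicator A x \<partial>\<nu>)"
    by (intro nn_integral_cong) (simp add: prob_space.emeasure_space_1[OF m_prob, simplified])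
  also have "\<dots> = emeasure \<nu> A" by (simp add: sets_nu)
  finally show "emeasure (distr \<pi> borel fst) A = emeasure \<nu> A" .
qed

end

context mrw begin

lemma int_kp: "(\<integral>z. G z \<partial>kp x) = (\<integral>y. G (x, y) \<partial>m x)" if [measurable]: "G \<in> borel_measurable (borel \<Otimes>\<^sub>M borel)"
  for G :: "'a \<times> 'a \<Rightarrow> real"
  unfolding kp_def by (subst integral_distr) auto

lemma meas_inner[measurable]: fixes G :: "'a \<times> 'a \<Rightarrow> real"
  assumes [measurable]: "G \<in> borel_measurable (borel \<Otimes>\<^sub>M borel)"
  shows "(\<lambda>x. \<integral>y. G (x, y) \<partial>m x) \<in> borel_measurable borel"
proof -
  have "(\<lambda>x. \<integral>z. G z \<partial>kp x) \<in> borel_measurable borel"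
    by (rule measurable_compose[OF kp_meas integral_measurable_subprob_algebra]) simp
  then show ?thesis by (simp add: int_kp)
qed

lemma meas_inner_nn[measurable]: fixes G :: "'a \<times> 'a \<Rightarrow> ennreal"
  assumes [measurable]: "G \<in> borel_measurable (borel \<Otimes>\<^sub>M borel)"
  shows "(\<lambda>x. \<integral>\<^sup>+y. G (x, y) \<partial>m x) \<in> borel_measurable borel"
  by (rule nn_integral_measurable_subprob_algebra2[OF _ K]) simp

lemma KF: fixes G :: "'a \<times> 'a \<Rightarrow> real"
  assumes [measurable]: "G \<in> borel_measurable (borel \<Otimes>\<^sub>M borel)" and int: "integrable \<pi> G"
  shows "AE x in \<nu>. integrable (m x) (\<lambda>y. G (x, y))"
    and "integrable \<nu> (\<lambda>x. \<integral>y. G (x, y) \<partial>m x)"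
    and "(\<integral>x. (\<integral>y. G (x, y) \<partial>m x) \<partial>\<nu>) = (\<integral>z. G z \<partial>\<pi>)"
proof -
  have fin: "(\<integral>\<^sup>+z. norm (G z) \<partial>\<pi>) < \<infinity>" using int by (simp add: integrable_iff_bounded)
  have eqn: "(\<integral>\<^sup>+z. norm (G z) \<partial>\<pi>) = (\<integral>\<^sup>+x. \<integral>\<^sup>+y. norm (G (x, y)) \<partial>m x \<partial>\<nu>)"
    by (rule PI) simp
  have AEfin: "AE x in \<nu>. (\<integral>\<^sup>+y. norm (G (x, y)) \<partial>m x) \<noteq> \<infinity>"
    by (rule nn_integral_PInf_AE) (use fin eqn in auto)
  show AEint: "AE x in \<nu>. integrable (m x) (\<lambda>y. G (x, y))"
    using AEfin by eventually_elim (simp add: integrable_iff_bounded top.not_eq_extremum)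
  show "integrable \<nu> (\<lambda>x. \<integral>y. G (x, y) \<partial>m x)"
  proof (rule integrableI_bounded)
    show "(\<lambda>x. \<integral>y. G (x, y) \<partial>m x) \<in> borel_measurable \<nu>" by simp
    have "(\<integral>\<^sup>+x. norm (\<integral>y. G (x, y) \<partial>m x) \<partial>\<nu>) \<le> (\<integral>\<^sup>+x. \<integral>\<^sup>+y. norm (G (x, y)) \<partial>m x \<partial>\<nu>)"
    proof (rule nn_integral_mono)
      fix x show "ennreal (norm (\<integral>y. G (x, y) \<partial>m x)) \<le> (\<integral>\<^sup>+y. norm (G (x, y)) \<partial>m x)"
      proof (cases "integrable (m x) (\<lambda>y. G (x, y))")
        case True then show ?thesis using integral_norm_bound_ennreal[OF True] by simp
      next
        case False then show ?thesis by (simp add: not_integrable_integral_eq)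
      qed
    qed
    then show "(\<integral>\<^sup>+x. norm (\<integral>y. G (x, y) \<partial>m x) \<partial>\<nu>) < \<infinity>" using fin eqn by auto
  qed
  define ap where "ap x = (\<integral>\<^sup>+y. ennreal (G (x, y)) \<partial>m x)" for x
  define an where "an x = (\<integral>\<^sup>+y. ennreal (- G (x, y)) \<partial>m x)" for x
  have [measurable]: "ap \<in> borel_measurable borel" "an \<in> borel_measurable borel"
    unfolding ap_def an_def by simp_all
  have apI: "(\<integral>\<^sup>+z. ennreal (G z) \<partial>\<pi>) = (\<integral>\<^sup>+x. ap x \<partial>\<nu>)" unfolding ap_def by (rule PI) simp
  have anI: "(\<integral>\<^sup>+z. ennreal (- G z) \<partial>\<pi>) = (\<integral>\<^sup>+x. an x \<partial>\<nu>)" unfolding an_def by (rule PI) simp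
  have apf: "(\<integral>\<^sup>+x. ap x \<partial>\<nu>) < \<infinity>"
  proof -
    have "(\<integral>\<^sup>+z. ennreal (G z) \<partial>\<pi>) \<le> (\<integral>\<^sup>+z. norm (G z) \<partial>\<pi>)" by (intro nn_integral_mono) auto
    then show ?thesis using fin apI by auto
  qed
  have anf: "(\<integral>\<^sup>+x. an x \<partial>\<nu>) < \<infinity>"
  proof -
    have "(\<integral>\<^sup>+z. ennreal (- G z) \<partial>\<pi>) \<le> (\<integral>\<^sup>+z. norm (G z) \<partial>\<pi>)" by (intro nn_integral_mono) auto
    then show ?thesis using fin anI by auto
  qed
  have apAE: "AE x in \<nu>. ap x \<noteq> \<infinity>" by (rule nn_integral_PInf_AE) (use apf in auto)
  have anAE: "AE x in \<nu>. an x \<noteq> \<infinity>" by (rule nn_integral_PInf_AE) (use anf in auto)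
  have ia: "integrable \<nu> (\<lambda>x. enn2real (ap x))"
  proof (rule integrableI_nonneg)
    have "(\<integral>\<^sup>+x. ennreal (enn2real (ap x)) \<partial>\<nu>) \<le> (\<integral>\<^sup>+x. ap x \<partial>\<nu>)"
      by (intro nn_integral_mono) (simp add: ennreal_enn2real_if)
    then show "(\<integral>\<^sup>+x. ennreal (enn2real (ap x)) \<partial>\<nu>) < \<infinity>" using apf by auto
  qed auto
  have ib: "integrable \<nu> (\<lambda>x. enn2real (an x))"
  proof (rule integrableI_nonneg)
    have "(\<integral>\<^sup>+x. ennreal (enn2real (an x)) \<partial>\<nu>) \<le> (\<integral>\<^sup>+x. an x \<partial>\<nu>)"
      by (intro nn_integral_mono) (simp add: ennreal_enn2real_if)
    then show "(\<integral>\<^sup>+x. ennreal (enn2real (an x)) \<partial>\<nu>) < \<infinity>" using anf by auto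
  qed auto
  have va: "(\<integral>x. enn2real (ap x) \<partial>\<nu>) = enn2real (\<integral>\<^sup>+x. ap x \<partial>\<nu>)"
  proof -
    have "(\<integral>x. enn2real (ap x) \<partial>\<nu>) = enn2real (\<integral>\<^sup>+x. ennreal (enn2real (ap x)) \<partial>\<nu>)"
      by (rule integral_eq_nn_integral) auto
    also have "(\<integral>\<^sup>+x. ennreal (enn2real (ap x)) \<partial>\<nu>) = (\<integral>\<^sup>+x. ap x \<partial>\<nu>)"
      by (rule nn_integral_cong_AE) (use apAE in \<open>auto simp: less_top\<close>)
    finally show ?thesis .
  qed
  have vb: "(\<integral>x. enn2real (an x) \<partial>\<nu>) = enn2real (\<integral>\<^sup>+x. an x \<partial>\<nu>)"
  proof -
    have "(\<integral>x. enn2real (an x) \<partial>\<nu>) = enn2real (\<integral>\<^sup>+x. ennreal (enn2real (an x)) \<partial>\<nu>)"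
      by (rule integral_eq_nn_integral) auto
    also have "(\<integral>\<^sup>+x. ennreal (enn2real (an x)) \<partial>\<nu>) = (\<integral>\<^sup>+x. an x \<partial>\<nu>)"
      by (rule nn_integral_cong_AE) (use anAE in \<open>auto simp: less_top\<close>)
    finally show ?thesis .
  qed
  have "(\<integral>x. (\<integral>y. G (x, y) \<partial>m x) \<partial>\<nu>) = (\<integral>x. enn2real (ap x) - enn2real (an x) \<partial>\<nu>)"
  proof (rule integral_cong_AE)
    show "AE x in \<nu>. (\<integral>y. G (x, y) \<partial>m x) = enn2real (ap x) - enn2real (an x)"
      using AEint by eventually_elim (simp add: ap_def an_def real_lebesgue_integral_def)
  qed auto
  also have "\<dots> = enn2real (\<integral>\<^sup>+x. ap x \<partial>\<nu>) - enn2real (\<integral>\<^sup>+x. an x \<partial>\<nu>)"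
    using ia ib va vb by simp
  also have "\<dots> = (\<integral>z. G z \<partial>\<pi>)"
    using int by (simp add: real_lebesgue_integral_def apI anI)
  finally show "(\<integral>x. (\<integral>y. G (x, y) \<partial>m x) \<partial>\<nu>) = (\<integral>z. G z \<partial>\<pi>)" .
qed

end

lemma jensen_sq: fixes f :: "'b \<Rightarrow> real"
  assumes "prob_space M" "integrable M f" "integrable M (\<lambda>x. (f x)^2)"
  shows "(\<integral>x. f x \<partial>M)^2 \<le> (\<integral>x. (f x)^2 \<partial>M)"
proof -
  interpret prob_space M by fact
  define c where "c = (\<integral>x. f x \<partial>M)"
  have "0 \<le> (\<integral>x. (f x - c)^2 \<partial>M)" by simp
  also have "(\<integral>x. (f x - c)^2 \<partial>M) = (\<integral>x. (f x)^2 - 2 * c * f x + c^2 \<partial>M)"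
    by (simp add: power2_diff algebra_simps)
  also have "\<dots> = (\<integral>x. (f x)^2 \<partial>M) - 2 * c * c + c^2"
    using assms by (simp add: c_def prob_space)
  finally show ?thesis by (simp add: c_def power2_eq_square)
qed

lemma L2_meas[measurable_dest]: "f \<in> L2 M \<Longrightarrow> f \<in> borel_measurable M"
  by (simp add: L2_def)

lemma L2_sq: "f \<in> L2 M \<Longrightarrow> integrable M (\<lambda>x. (f x)^2)"
  by (simp add: L2_def)

lemma L2_prod: fixes f g :: "'z \<Rightarrow> real"
  assumes "f \<in> L2 M" "g \<in> L2 M" shows "integrable M (\<lambda>x. f x * g x)"
proof -
  have b: "integrable M (\<lambda>x. (f x)^2 + (g x)^2)" using assms by (simp add: L2_sq)
  have "AE x in M. norm (f x * g x) \<le> norm ((f x)^2 + (g x)^2)"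
  proof (rule AE_I2)
    fix x have "0 \<le> (\<bar>f x\<bar> - \<bar>g x\<bar>)^2" by simp
    then have "2 * (\<bar>f x\<bar> * \<bar>g x\<bar>) \<le> \<bar>f x\<bar>^2 + \<bar>g x\<bar>^2" by (simp add: power2_diff)
    then have "2 * \<bar>f x * g x\<bar> \<le> (f x)^2 + (g x)^2" by (simp add: abs_mult)
    then show "norm (f x * g x) \<le> norm ((f x)^2 + (g x)^2)" by simp
  qed
  then show ?thesis by (rule Bochner_Integration.integrable_bound[OF b, rotated]) (use assms in \<open>auto simp: L2_def intro: borel_measurable_times\<close>)
qed

lemma L2_int: assumes "finite_measure M" "f \<in> L2 M" shows "integrable M f"
proof -
  interpret finite_measure M by fact
  have "integrable M (\<lambda>x. f x * 1)" by (rule L2_prod) (use assms in \<open>auto simp: L2_def\<close>)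
  then show ?thesis by simp
qed

lemma L2_add: "f \<in> L2 M \<Longrightarrow> g \<in> L2 M \<Longrightarrow> (\<lambda>x. f x + g x) \<in> L2 M"
  unfolding L2_def by (auto simp: power2_sum intro!: L2_prod[unfolded L2_def])

lemma L2_cmult: "f \<in> L2 M \<Longrightarrow> (\<lambda>x. c * f x) \<in> L2 M"
  unfolding L2_def by (auto simp: power_mult_distrib)

lemma L2_diff: "f \<in> L2 M \<Longrightarrow> g \<in> L2 M \<Longrightarrow> (\<lambda>x. f x - g x) \<in> L2 M"
  using L2_add[of f M "\<lambda>x. (-1) * g x"] L2_cmult[of g M "-1"] by simp

lemma L2_const: "finite_measure M \<Longrightarrow> (\<lambda>x. c) \<in> L2 M"
  unfolding L2_def by (auto simp: finite_measure.integrable_const)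

lemma L2_cong: assumes "f \<in> L2 M" "g \<in> borel_measurable M" "AE x in M. f x = g x" shows "g \<in> L2 M"
proof -
  have "integrable M (\<lambda>x. (f x)^2) \<longleftrightarrow> integrable M (\<lambda>x. (g x)^2)"
    by (rule integrable_cong_AE) (use assms in \<open>auto simp: L2_def\<close>)
  then show ?thesis using assms by (auto simp: L2_def)
qed

context mrw begin

lemma finite_nu: "finite_measure \<nu>" using prob by (simp add: prob_space_def)

definition P :: "('a \<Rightarrow> real) \<Rightarrow> 'a \<Rightarrow> real" where "P f x = (\<integral>y. f y \<partial>m x)"
definition ip :: "('a \<Rightarrow> real) \<Rightarrow> ('a \<Rightarrow> real) \<Rightarrow> real" where "ip f g = (\<integral>x. f x * g x \<partial>\<nu>)"

lemma m_measure1[simp]: "measure (m x) UNIV = 1"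
  using prob_space.prob_space[OF m_prob[of x]] by simp

lemma L2_int': "f \<in> L2 \<nu> \<Longrightarrow> integrable \<nu> f" by (rule L2_int[OF finite_nu])

lemma marg2: fixes h :: "'a \<Rightarrow> real" assumes [measurable]: "h \<in> borel_measurable borel"
  shows "integrable \<pi> (\<lambda>z. h (snd z)) \<longleftrightarrow> integrable \<nu> h"
    and "(\<integral>z. h (snd z) \<partial>\<pi>) = (\<integral>x. h x \<partial>\<nu>)"
proof -
  have "integrable (distr \<pi> borel snd) h \<longleftrightarrow> integrable \<pi> (\<lambda>z. h (snd z))"
    using integrable_distr_eq[of snd \<pi> borel h] by simp
  then show "integrable \<pi> (\<lambda>z. h (snd z)) \<longleftrightarrow> integrable \<nu> h" by (simp add: marg_snd)
  have "(\<integral>x. h x \<partial>distr \<pi> borel snd) = (\<integral>z. h (snd z) \<partial>\<pi>)"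
    by (rule integral_distr) auto
  then show "(\<integral>z. h (snd z) \<partial>\<pi>) = (\<integral>x. h x \<partial>\<nu>)" by (simp add: marg_snd)
qed

lemma marg1: fixes h :: "'a \<Rightarrow> real" assumes [measurable]: "h \<in> borel_measurable borel"
  shows "integrable \<pi> (\<lambda>z. h (fst z)) \<longleftrightarrow> integrable \<nu> h"
    and "(\<integral>z. h (fst z) \<partial>\<pi>) = (\<integral>x. h x \<partial>\<nu>)"
proof -
  have "integrable (distr \<pi> borel fst) h \<longleftrightarrow> integrable \<pi> (\<lambda>z. h (fst z))"
    using integrable_distr_eq[of fst \<pi> borel h] by simp
  then show "integrable \<pi> (\<lambda>z. h (fst z)) \<longleftrightarrow> integrable \<nu> h" by (simp add: marg_fst)
  have "(\<integral>x. h x \<partial>distr \<pi> borel fst) = (\<integral>z. h (fst z) \<partial>\<pi>)"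
    by (rule integral_distr) auto
  then show "(\<integral>z. h (fst z) \<partial>\<pi>) = (\<integral>x. h x \<partial>\<nu>)" by (simp add: marg_fst)
qed

lemma pi_swap_int: fixes G :: "'a \<times> 'a \<Rightarrow> real"
  assumes [measurable]: "G \<in> borel_measurable (borel \<Otimes>\<^sub>M borel)"
  shows "(\<integral>z. G (snd z, fst z) \<partial>\<pi>) = (\<integral>z. G z \<partial>\<pi>)"
proof -
  have "(\<integral>z. G z \<partial>distr \<pi> (borel \<Otimes>\<^sub>M borel) (\<lambda>(x, y). (y, x))) = (\<integral>z. G ((\<lambda>(x, y). (y, x)) z) \<partial>\<pi>)"
    by (rule integral_distr) auto
  then show ?thesis by (simp add: pi_swap case_prod_beta)
qed

lemma INV: fixes h :: "'a \<Rightarrow> real" assumes "integrable \<nu> h"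
  shows "AE x in \<nu>. integrable (m x) h" and "integrable \<nu> (P h)" and "(\<integral>x. P h x \<partial>\<nu>) = (\<integral>x. h x \<partial>\<nu>)"
proof -
  have [measurable]: "h \<in> borel_measurable borel" using borel_measurable_integrable[OF assms] by simp
  have I: "integrable \<pi> (\<lambda>z. h (snd z))" using assms by (simp add: marg2)
  show "AE x in \<nu>. integrable (m x) h" using KF(1)[OF _ I] by simp
  show "integrable \<nu> (P h)" using KF(2)[OF _ I] by (simp add: P_def[abs_def])
  show "(\<integral>x. P h x \<partial>\<nu>) = (\<integral>x. h x \<partial>\<nu>)" using KF(3)[OF _ I] by (simp add: P_def marg2)
qed

lemma P_meas[measurable]: "h \<in> borel_measurable borel \<Longrightarrow> P h \<in> borel_measurable borel"
  unfolding P_def by (rule meas_inner[where G="\<lambda>z. h (snd z)", simplified]) simp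

lemma lap_meas[measurable]: "h \<in> borel_measurable borel \<Longrightarrow> laplacian m h \<in> borel_measurable borel"
  unfolding laplacian_def by (rule meas_inner[where G="\<lambda>z. h (snd z) - h (fst z)", simplified]) simp

lemma lap_AE: fixes h :: "'a \<Rightarrow> real" assumes "integrable \<nu> h" shows "AE x in \<nu>. laplacian m h x = P h x - h x"
  using INV(1)[OF assms]
proof eventually_elim
  case (elim x)
  interpret prob_space "m x" by (rule m_prob)
  show ?case using elim by (simp add: laplacian_def P_def prob_space)
qed

lemma P_L2: assumes "f \<in> L2 \<nu>" shows "P f \<in> L2 \<nu>" and "ip (P f) (P f) \<le> ip f f"
proof -
  have [measurable]: "f \<in> borel_measurable borel" using assms by (simp add: L2_def)
  have i1: "integrable \<nu> f" using assms by (rule L2_int')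
  have i2: "integrable \<nu> (\<lambda>x. (f x)^2)" using assms by (rule L2_sq)
  have AEj: "AE x in \<nu>. (P f x)^2 \<le> P (\<lambda>y. (f y)^2) x"
    using INV(1)[OF i1] INV(1)[OF i2]
  proof eventually_elim
    case (elim x) then show ?case unfolding P_def by (intro jensen_sq m_prob)
  qed
  have sq: "integrable \<nu> (\<lambda>x. (P f x)^2)"
  proof (rule Bochner_Integration.integrable_bound[OF INV(2)[OF i2]])
    show "(\<lambda>x. (P f x)^2) \<in> borel_measurable \<nu>" by simp
    show "AE x in \<nu>. norm ((P f x)^2) \<le> norm (P (\<lambda>y. (f y)^2) x)" using AEj by eventually_elim auto
  qed
  then show "P f \<in> L2 \<nu>" by (simp add: L2_def)
  have "ip (P f) (P f) = (\<integral>x. (P f x)^2 \<partial>\<nu>)" by (simp add: ip_def power2_eq_square)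
  also have "\<dots> \<le> (\<integral>x. P (\<lambda>y. (f y)^2) x \<partial>\<nu>)"
    by (rule integral_mono_AE[OF sq INV(2)[OF i2] AEj])
  also have "\<dots> = (\<integral>x. (f x)^2 \<partial>\<nu>)" by (rule INV(3)[OF i2])
  also have "\<dots> = ip f f" by (simp add: ip_def power2_eq_square)
  finally show "ip (P f) (P f) \<le> ip f f" .
qed

lemma pi_prod_int: assumes "f \<in> L2 \<nu>" "g \<in> L2 \<nu>"
  shows "integrable \<pi> (\<lambda>z. g (fst z) * f (snd z))"
proof -
  have [measurable]: "f \<in> borel_measurable borel" "g \<in> borel_measurable borel" using assms by (auto simp: L2_def)
  have a: "integrable \<pi> (\<lambda>z. (g (fst z))^2)" using marg1[of "\<lambda>x. (g x)^2"] L2_sq[OF assms(2)] by simp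
  have b: "integrable \<pi> (\<lambda>z. (f (snd z))^2)" using marg2[of "\<lambda>x. (f x)^2"] L2_sq[OF assms(1)] by simp
  have "(\<lambda>z. g (fst z)) \<in> L2 \<pi>" "(\<lambda>z. f (snd z)) \<in> L2 \<pi>" using a b by (auto simp: L2_def)
  then show ?thesis by (rule L2_prod)
qed

lemma ip_P: assumes "f \<in> L2 \<nu>" "g \<in> L2 \<nu>"
  shows "ip g (P f) = (\<integral>z. g (fst z) * f (snd z) \<partial>\<pi>)"
proof -
  have [measurable]: "f \<in> borel_measurable borel" "g \<in> borel_measurable borel" using assms by (auto simp: L2_def)
  have "(\<integral>x. (\<integral>y. g (fst (x, y)) * f (snd (x, y)) \<partial>m x) \<partial>\<nu>) = (\<integral>z. g (fst z) * f (snd z) \<partial>\<pi>)"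
    by (rule KF(3)[OF _ pi_prod_int[OF assms]]) simp
  then show ?thesis by (simp add: ip_def P_def)
qed

lemma P_sym: assumes "f \<in> L2 \<nu>" "g \<in> L2 \<nu>" shows "ip g (P f) = ip f (P g)"
proof -
  have [measurable]: "f \<in> borel_measurable borel" "g \<in> borel_measurable borel" using assms by (auto simp: L2_def)
  have "ip g (P f) = (\<integral>z. g (fst z) * f (snd z) \<partial>\<pi>)" by (rule ip_P[OF assms])
  also have "\<dots> = (\<integral>z. g (snd z) * f (fst z) \<partial>\<pi>)"
    using pi_swap_int[of "\<lambda>z. g (fst z) * f (snd z)"] by simp
  also have "\<dots> = ip f (P g)" by (simp add: ip_P[OF assms(2,1)] mult.commute)
  finally show ?thesis .
qed

end

context mrw begin

lemma ip_comm: "ip f g = ip g f" by (simp add: ip_def mult.commute)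

lemma ip_cong: assumes "f \<in> borel_measurable borel" "f' \<in> borel_measurable borel"
  "g \<in> borel_measurable borel" "g' \<in> borel_measurable borel"
  "AE x in \<nu>. f x = f' x" "AE x in \<nu>. g x = g' x"
  shows "ip f g = ip f' g'"
  unfolding ip_def by (rule integral_cong_AE) (use assms in auto)

lemma lap_eq: "f \<in> L2 \<nu> \<Longrightarrow> AE x in \<nu>. laplacian m f x = P f x - f x"
  by (rule lap_AE[OF L2_int'])

lemma lap_L2: assumes "f \<in> L2 \<nu>" shows "laplacian m f \<in> L2 \<nu>"
proof (rule L2_cong[OF L2_diff[OF P_L2(1)[OF assms] assms]])
  show "laplacian m f \<in> borel_measurable \<nu>" using assms by (auto simp: L2_def intro!: lap_meas)
  show "AE x in \<nu>. P f x - f x = laplacian m f x" using lap_eq[OF assms] by auto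
qed

lemma ip_diff_left: "f \<in> L2 \<nu> \<Longrightarrow> g \<in> L2 \<nu> \<Longrightarrow> h \<in> L2 \<nu> \<Longrightarrow> ip (\<lambda>x. f x - g x) h = ip f h - ip g h"
  unfolding ip_def by (simp add: left_diff_distrib L2_prod)

lemma ip_lap: assumes "f \<in> L2 \<nu>" "g \<in> L2 \<nu>" shows "ip (laplacian m f) g = ip (P f) g - ip f g"
proof -
  have "ip (laplacian m f) g = ip (\<lambda>x. P f x - f x) g"
    by (rule ip_cong) (use assms lap_eq[OF assms(1)] P_L2[OF assms(1)] in \<open>auto simp: L2_def\<close>)
  also have "\<dots> = ip (P f) g - ip f g" by (rule ip_diff_left) (use assms P_L2 in auto)
  finally show ?thesis .
qed

lemma lap_sym: assumes "f \<in> L2 \<nu>" "g \<in> L2 \<nu>" shows "ip (laplacian m f) g = ip f (laplacian m g)"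
  using ip_lap[OF assms] ip_lap[OF assms(2,1)] P_sym[OF assms(2,1)] by (simp add: ip_comm)

lemma Hpi_int: assumes "f \<in> L2 \<nu>" shows "integrable \<pi> (\<lambda>z. (f (snd z) - f (fst z))^2)"
proof -
  have [measurable]: "f \<in> borel_measurable borel" using assms by (simp add: L2_def)
  have a: "integrable \<pi> (\<lambda>z. (f (snd z))^2)" using marg2[of "\<lambda>x. (f x)^2"] L2_sq[OF assms] by simp
  have b: "integrable \<pi> (\<lambda>z. (f (fst z))^2)" using marg1[of "\<lambda>x. (f x)^2"] L2_sq[OF assms] by simp
  have c: "integrable \<pi> (\<lambda>z. f (fst z) * f (snd z))" by (rule pi_prod_int[OF assms assms])
  have "integrable \<pi> (\<lambda>z. (f (snd z))^2 - 2 * (f (fst z) * f (snd z)) + (f (fst z))^2)"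
    using a b c by simp
  then show ?thesis by (simp add: power2_diff algebra_simps)
qed

lemma H_pi: assumes "f \<in> L2 \<nu>" shows "H_m m \<nu> f = 1/2 * (\<integral>z. (f (snd z) - f (fst z))^2 \<partial>\<pi>)"
proof -
  have [measurable]: "f \<in> borel_measurable borel" using assms by (simp add: L2_def)
  have "(\<integral>x. (\<integral>y. (f (snd (x, y)) - f (fst (x, y)))^2 \<partial>m x) \<partial>\<nu>) = (\<integral>z. (f (snd z) - f (fst z))^2 \<partial>\<pi>)"
    by (rule KF(3)[OF _ Hpi_int[OF assms]]) simp
  then show ?thesis by (simp add: H_m_def)
qed

lemma H_eq: assumes "f \<in> L2 \<nu>" shows "H_m m \<nu> f = ip f f - ip f (P f)"
proof -
  have [measurable]: "f \<in> borel_measurable borel" using assms by (simp add: L2_def)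
  have a: "integrable \<pi> (\<lambda>z. (f (snd z))^2)" using marg2[of "\<lambda>x. (f x)^2"] L2_sq[OF assms] by simp
  have b: "integrable \<pi> (\<lambda>z. (f (fst z))^2)" using marg1[of "\<lambda>x. (f x)^2"] L2_sq[OF assms] by simp
  have c: "integrable \<pi> (\<lambda>z. f (fst z) * f (snd z))" by (rule pi_prod_int[OF assms assms])
  have "(\<integral>z. (f (snd z) - f (fst z))^2 \<partial>\<pi>) =
      (\<integral>z. (f (snd z))^2 - 2 * (f (fst z) * f (snd z)) + (f (fst z))^2 \<partial>\<pi>)"
    by (simp add: power2_diff algebra_simps)
  also have "\<dots> = (\<integral>z. (f (snd z))^2 \<partial>\<pi>) - 2 * (\<integral>z. f (fst z) * f (snd z) \<partial>\<pi>) + (\<integral>z. (f (fst z))^2 \<partial>\<pi>)"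
    using a b c by simp
  also have "\<dots> = ip f f - 2 * ip f (P f) + ip f f"
    using marg1(2)[of "\<lambda>x. (f x)^2"] marg2(2)[of "\<lambda>x. (f x)^2"] ip_P[OF assms assms]
    by (simp add: ip_def power2_eq_square)
  finally show ?thesis using H_pi[OF assms] by simp
qed

lemma H_lap: assumes "f \<in> L2 \<nu>" shows "H_m m \<nu> f = - ip (laplacian m f) f"
  using H_eq[OF assms] ip_lap[OF assms assms] by (simp add: ip_comm)

lemma H_nonneg: assumes "f \<in> L2 \<nu>" shows "0 \<le> H_m m \<nu> f"
proof -
  have "0 \<le> (\<integral>z. (f (snd z) - f (fst z))^2 \<partial>\<pi>)" by (rule Bochner_Integration.integral_nonneg) simp
  then show ?thesis using H_pi[OF assms] by linarith
qed

lemma H_le: assumes "f \<in> L2 \<nu>" shows "H_m m \<nu> f \<le> 2 * ip f f"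
proof -
  have [measurable]: "f \<in> borel_measurable borel" using assms by (simp add: L2_def)
  have a: "integrable \<pi> (\<lambda>z. (f (snd z))^2)" using marg2[of "\<lambda>x. (f x)^2"] L2_sq[OF assms] by simp
  have b: "integrable \<pi> (\<lambda>z. (f (fst z))^2)" using marg1[of "\<lambda>x. (f x)^2"] L2_sq[OF assms] by simp
  have "(\<integral>z. (f (snd z) - f (fst z))^2 \<partial>\<pi>) \<le> (\<integral>z. 2 * (f (snd z))^2 + 2 * (f (fst z))^2 \<partial>\<pi>)"
  proof (rule integral_mono[OF Hpi_int[OF assms]])
    show "integrable \<pi> (\<lambda>z. 2 * (f (snd z))^2 + 2 * (f (fst z))^2)" using a b by simp
    fix z :: "'a \<times> 'a"
    have "0 \<le> (f (snd z) + f (fst z))^2" by simp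
    then show "(f (snd z) - f (fst z))^2 \<le> 2 * (f (snd z))^2 + 2 * (f (fst z))^2"
      by (simp add: power2_diff power2_sum)
  qed
  also have "\<dots> = 2 * ip f f + 2 * ip f f"
    using a b marg1(2)[of "\<lambda>x. (f x)^2"] marg2(2)[of "\<lambda>x. (f x)^2"] by (simp add: ip_def power2_eq_square)
  finally show ?thesis using H_pi[OF assms] by simp
qed

lemma lap_sq_le: assumes "f \<in> L2 \<nu>" shows "ip (laplacian m f) (laplacian m f) \<le> 2 * H_m m \<nu> f"
proof -
  have [measurable]: "f \<in> borel_measurable borel" using assms by (simp add: L2_def)
  have PL: "P f \<in> L2 \<nu>" by (rule P_L2(1)[OF assms])
  have "ip (laplacian m f) (laplacian m f) = ip (\<lambda>x. P f x - f x) (\<lambda>x. P f x - f x)"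
    by (rule ip_cong) (use assms lap_eq[OF assms(1)] PL in \<open>auto simp: L2_def\<close>)
  also have "\<dots> = (\<integral>x. P f x * P f x - 2 * (f x * P f x) + f x * f x \<partial>\<nu>)"
    unfolding ip_def by (rule Bochner_Integration.integral_cong) (auto simp: algebra_simps)
  also have "\<dots> = ip (P f) (P f) - 2 * ip f (P f) + ip f f"
    using L2_prod[OF PL PL] L2_prod[OF assms PL] L2_prod[OF assms assms] by (simp add: ip_def)
  also have "\<dots> \<le> 2 * (ip f f - ip f (P f))" using P_L2(2)[OF assms] by simp
  finally show ?thesis using H_eq[OF assms] by simp
qed

lemma lap_int: fixes h :: "'a \<Rightarrow> real" assumes "integrable \<nu> h"
  shows "integrable \<nu> (laplacian m h)" and "(\<integral>x. laplacian m h x \<partial>\<nu>) = 0"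
proof -
  have [measurable]: "h \<in> borel_measurable borel" using borel_measurable_integrable[OF assms] by simp
  have i: "integrable \<nu> (\<lambda>x. P h x - h x)" using INV(2)[OF assms] assms by simp
  show "integrable \<nu> (laplacian m h)"
    by (rule integrable_cong_AE[THEN iffD1, OF _ _ _ i]) (use lap_AE[OF assms] in auto)
  have "(\<integral>x. laplacian m h x \<partial>\<nu>) = (\<integral>x. P h x - h x \<partial>\<nu>)"
    by (rule integral_cong_AE) (use lap_AE[OF assms] in auto)
  also have "\<dots> = 0" using INV(2,3)[OF assms] assms by simp
  finally show "(\<integral>x. laplacian m h x \<partial>\<nu>) = 0" .
qed

lemma H_quad: assumes "u \<in> L2 \<nu>" "f \<in> L2 \<nu>"
  shows "H_m m \<nu> u \<le> 2 * H_m m \<nu> f + 2 * H_m m \<nu> (\<lambda>x. u x - f x)"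
proof -
  have uf: "(\<lambda>x. u x - f x) \<in> L2 \<nu>" by (rule L2_diff[OF assms])
  have "(\<integral>z. (u (snd z) - u (fst z))^2 \<partial>\<pi>) \<le>
     (\<integral>z. 2 * (f (snd z) - f (fst z))^2 + 2 * ((u (snd z) - f (snd z)) - (u (fst z) - f (fst z)))^2 \<partial>\<pi>)"
  proof (rule integral_mono[OF Hpi_int[OF assms(1)]])
    show "integrable \<pi> (\<lambda>z. 2 * (f (snd z) - f (fst z))^2 + 2 * ((u (snd z) - f (snd z)) - (u (fst z) - f (fst z)))^2)"
      using Hpi_int[OF assms(2)] Hpi_int[OF uf] by simp
    fix z :: "'a \<times> 'a"
    have "0 \<le> ((f (snd z) - f (fst z)) - ((u (snd z) - f (snd z)) - (u (fst z) - f (fst z))))^2" by simp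
    then show "(u (snd z) - u (fst z))^2 \<le> 2 * (f (snd z) - f (fst z))^2 + 2 * ((u (snd z) - f (snd z)) - (u (fst z) - f (fst z)))^2"
      by (simp add: power2_eq_square algebra_simps)
  qed
  also have "\<dots> = 2 * (\<integral>z. (f (snd z) - f (fst z))^2 \<partial>\<pi>) + 2 * (\<integral>z. ((u (snd z) - f (snd z)) - (u (fst z) - f (fst z)))^2 \<partial>\<pi>)"
    using Hpi_int[OF assms(2)] Hpi_int[OF uf] by simp
  finally show ?thesis using H_pi[OF assms(1)] H_pi[OF assms(2)] H_pi[OF uf] by simp
qed

lemma H_zero: assumes "f \<in> L2 \<nu>" "H_m m \<nu> f = 0" shows "AE x in \<nu>. laplacian m f x = 0"
proof -
  have [measurable]: "f \<in> borel_measurable borel" using assms by (simp add: L2_def)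
  note I = Hpi_int[OF assms(1)]
  have i2: "integrable \<nu> (\<lambda>x. \<integral>y. (f y - f x)^2 \<partial>m x)" using KF(2)[OF _ I] by simp
  have "(\<integral>x. (\<integral>y. (f y - f x)^2 \<partial>m x) \<partial>\<nu>) = 0" using assms(2) by (simp add: H_m_def)
  then have "AE x in \<nu>. (\<integral>y. (f y - f x)^2 \<partial>m x) = 0"
    using integral_nonneg_eq_0_iff_AE[OF i2] by simp
  moreover have "AE x in \<nu>. integrable (m x) (\<lambda>y. (f y - f x)^2)" using KF(1)[OF _ I] by simp
  ultimately show ?thesis
  proof eventually_elim
    case (elim x)
    then have "AE y in m x. (f y - f x)^2 = 0" using integral_nonneg_eq_0_iff_AE[of "m x" "\<lambda>y. (f y - f x)^2"] by simp
    then have "AE y in m x. f y - f x = 0" by simp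
    then show ?case unfolding laplacian_def by (rule integral_eq_zero_AE)
  qed
qed

lemma H_shift: "H_m m \<nu> (\<lambda>x. f x - c) = H_m m \<nu> f" by (simp add: H_m_def)
lemma lap_shift: "laplacian m (\<lambda>x. f x - c) = laplacian m f" by (simp add: laplacian_def[abs_def])

end

lemma L2_limit:
  fixes s :: "nat \<Rightarrow> 'b \<Rightarrow> real"
  assumes L: "\<And>k. s k \<in> L2 M" and q: "0 < q" "q < 1"
    and A: "\<And>k. (\<integral>x. (s (Suc k) x - s k x)^2 \<partial>M) \<le> A * q^k"
  shows "\<exists>u\<in>L2 M. (\<lambda>k. \<integral>x. (s k x - u x)^2 \<partial>M) \<longlonglongrightarrow> 0"
proof -
  have [measurable]: "\<And>k. s k \<in> borel_measurable M" using L by (simp add: L2_def)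
  define e where "e k x = s (Suc k) x - s k x" for k x
  have [measurable]: "\<And>k. e k \<in> borel_measurable M" unfolding e_def[abs_def] by measurable
  have ie: "integrable M (\<lambda>x. (e k x)^2)" for k
    using L2_diff[OF L[of "Suc k"] L[of k]] unfolding e_def L2_def by simp
  have "0 \<le> (\<integral>x. (s (Suc 0) x - s 0 x)^2 \<partial>M)" by (rule Bochner_Integration.integral_nonneg) simp
  moreover have "(\<integral>x. (s (Suc 0) x - s 0 x)^2 \<partial>M) \<le> A" using A[of 0] by simp
  ultimately have A0: "0 \<le> A" by linarith
  define r where "r = sqrt q"
  have r: "0 < r" "r < 1" "r^2 = q" using q by (auto simp: r_def)
  define S where "S x = (\<Sum>k. ennreal ((e k x)^2 / r^k))" for x
  have [measurable]: "S \<in> borel_measurable M" unfolding S_def[abs_def] by measurable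
  have "(\<integral>\<^sup>+x. S x \<partial>M) = (\<Sum>k. \<integral>\<^sup>+x. ennreal ((e k x)^2 / r^k) \<partial>M)"
    unfolding S_def by (rule nn_integral_suminf) measurable
  also have "\<dots> \<le> (\<Sum>k. ennreal (A * r^k))"
  proof (rule suminf_le)
    fix k
    have "(\<integral>\<^sup>+x. ennreal ((e k x)^2 / r^k) \<partial>M) = ennreal (\<integral>x. (e k x)^2 / r^k \<partial>M)"
      by (rule nn_integral_eq_integral) (use ie r in auto)
    also have "(\<integral>x. (e k x)^2 / r^k \<partial>M) = (\<integral>x. (e k x)^2 \<partial>M) / r^k" by simp
    also have "\<dots> \<le> A * q^k / r^k"
      using A[of k] r by (intro divide_right_mono) (auto simp: e_def)
    also have "q^k = r^k * r^k" by (simp add: power2_eq_square power_mult_distrib flip: r(3))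
    then have "A * q^k / r^k = A * r^k" using r by simp
    finally show "(\<integral>\<^sup>+x. ennreal ((e k x)^2 / r^k) \<partial>M) \<le> ennreal (A * r^k)" by (simp add: ennreal_leI)
  qed auto
  also have "\<dots> = ennreal (\<Sum>k. A * r^k)"
    using A0 r by (intro suminf_ennreal2) (auto intro!: summable_mult summable_geometric)
  finally have "(\<integral>\<^sup>+x. S x \<partial>M) \<le> ennreal (\<Sum>k. A * r^k)" .
  then have fin: "(\<integral>\<^sup>+x. S x \<partial>M) < \<infinity>" by (rule le_less_trans) simp
  have AEf: "AE x in M. S x \<noteq> \<infinity>" by (rule nn_integral_PInf_AE) (use fin in auto)
  define B where "B x = enn2real (S x)" for x
  have [measurable]: "B \<in> borel_measurable M" unfolding B_def[abs_def] by measurable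
  have iB: "integrable M B"
  proof (rule integrableI_nonneg)
    have "(\<integral>\<^sup>+x. ennreal (B x) \<partial>M) \<le> (\<integral>\<^sup>+x. S x \<partial>M)"
      by (intro nn_integral_mono) (simp add: B_def ennreal_enn2real_if)
    then show "(\<integral>\<^sup>+x. ennreal (B x) \<partial>M) < \<infinity>" using fin by auto
  qed (auto simp: B_def)
  define w where "w = sqrt r"
  have w: "0 < w" "w < 1" "w^2 = r" using r by (auto simp: w_def)
  have bound: "\<bar>e k x\<bar> \<le> sqrt (B x) * w^k" if Sx: "S x \<noteq> \<infinity>" for k x
  proof -
    have "ennreal ((e k x)^2 / r^k) \<le> S x"
      unfolding S_def using sum_le_suminf[OF summableI, of "{k}" "\<lambda>k. ennreal ((e k x)^2 / r^k)"] by simp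
    also have "S x = ennreal (B x)" using Sx by (simp add: B_def less_top)
    finally have "ennreal ((e k x)^2 / r^k) \<le> ennreal (B x)" .
    then have "(e k x)^2 / r^k \<le> B x" by (subst (asm) ennreal_le_iff) (auto simp: B_def)
    then have "(e k x)^2 \<le> B x * r^k" using r by (simp add: divide_le_eq)
    then have "sqrt ((e k x)^2) \<le> sqrt (B x * r^k)" by (rule real_sqrt_le_mono)
    also have "sqrt (B x * r^k) = sqrt (B x) * w^k" by (simp add: real_sqrt_mult w_def real_sqrt_power)
    finally show ?thesis by simp
  qed
  have Bnn: "0 \<le> B x" for x by (simp add: B_def)
  have good: "summable (\<lambda>i. e i x) \<and> (\<lambda>k. s k x) \<longlonglongrightarrow> s 0 x + (\<Sum>i. e i x)
      \<and> (\<forall>k. \<bar>(\<Sum>i. e i x) + s 0 x - s k x\<bar> \<le> sqrt (B x) * w^k / (1 - w))"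
    if Sx: "S x \<noteq> \<infinity>" for x
  proof -
    have sg: "summable (\<lambda>i. sqrt (B x) * w^i)" using w by (intro summable_mult summable_geometric) simp
    have sa: "summable (\<lambda>i. \<bar>e i x\<bar>)"
      by (rule summable_rabs_comparison_test[OF _ sg]) (use bound[OF Sx] in auto)
    have se: "summable (\<lambda>i. e i x)" by (rule summable_rabs_cancel[OF sa])
    have tele: "s k x = s 0 x + (\<Sum>i<k. e i x)" for k
      unfolding e_def by (subst sum_lessThan_telescope) simp
    have lim: "(\<lambda>k. s k x) \<longlonglongrightarrow> s 0 x + (\<Sum>i. e i x)"
    proof -
      have "(\<lambda>k. s 0 x + (\<Sum>i<k. e i x)) \<longlonglongrightarrow> s 0 x + (\<Sum>i. e i x)"
        by (intro tendsto_add tendsto_const summable_LIMSEQ se)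
      moreover have "(\<lambda>k. s k x) = (\<lambda>k. s 0 x + (\<Sum>i<k. e i x))" by (rule ext) (rule tele)
      ultimately show ?thesis by simp
    qed
    have tail: "\<bar>(\<Sum>i. e i x) + s 0 x - s k x\<bar> \<le> sqrt (B x) * w^k / (1 - w)" for k
    proof -
      have "(\<Sum>i. e i x) + s 0 x - s k x = (\<Sum>i. e (i + k) x)"
        using suminf_split_initial_segment[OF se, of k] tele[of k] by simp
      also have "\<bar>\<dots>\<bar> \<le> (\<Sum>i. \<bar>e (i + k) x\<bar>)"
        by (rule summable_rabs) (use sa summable_iff_shift[of "\<lambda>i. \<bar>e i x\<bar>" k] in simp)
      also have "\<dots> \<le> (\<Sum>i. sqrt (B x) * w^k * w^i)"
      proof (rule suminf_le)
        show "summable (\<lambda>i. \<bar>e (i + k) x\<bar>)" using sa summable_iff_shift[of "\<lambda>i. \<bar>e i x\<bar>" k] by simp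
        show "summable (\<lambda>i. sqrt (B x) * w^k * w^i)" using w by (intro summable_mult summable_geometric) simp
        fix i show "\<bar>e (i + k) x\<bar> \<le> sqrt (B x) * w^k * w^i"
          using bound[OF Sx, of "i + k"] by (simp add: power_add mult_ac)
      qed
      also have "\<dots> = sqrt (B x) * w^k / (1 - w)"
        using w by (simp add: suminf_mult suminf_geometric)
      finally show ?thesis .
    qed
    show ?thesis using se lim tail by blast
  qed
  define u where "u x = lim (\<lambda>k. s k x)" for x
  have [measurable]: "u \<in> borel_measurable M" unfolding u_def[abs_def] by measurable
  have ueq: "AE x in M. u x = s 0 x + (\<Sum>i. e i x)"
    using AEf by eventually_elim (use good in \<open>auto simp: u_def intro: limI\<close>)
  define c where "c k = r^k / (1 - w)^2" for k
  have c0: "0 \<le> c k" for k using w r by (simp add: c_def)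
  have pw: "AE x in M. (s k x - u x)^2 \<le> B x * c k" for k
    using AEf ueq
  proof eventually_elim
    case (elim x)
    have "\<bar>s k x - u x\<bar> \<le> sqrt (B x) * w^k / (1 - w)"
      using good[OF elim(1)] elim(2) by (simp add: abs_minus_commute add.commute)
    then have "\<bar>s k x - u x\<bar>^2 \<le> (sqrt (B x) * w^k / (1 - w))^2"
      by (rule power_mono) simp
    also have "\<dots> = B x * c k" using w Bnn[of x]
      by (simp add: c_def power_divide power_mult_distrib power_mult[symmetric] flip: w(3))
         (simp add: power_mult mult.commute)
    finally show ?case by simp
  qed
  have iBc: "integrable M (\<lambda>x. B x * c k)" for k using iB by simp
  have isu: "integrable M (\<lambda>x. (s k x - u x)^2)" for k
  proof (rule Bochner_Integration.integrable_bound[OF iBc[of k]])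
    show "AE x in M. norm ((s k x - u x)^2) \<le> norm (B x * c k)"
      using pw[of k] by eventually_elim (use c0[of k] Bnn in simp)
  qed simp
  have le: "(\<integral>x. (s k x - u x)^2 \<partial>M) \<le> (\<integral>x. B x \<partial>M) * c k" for k
    using integral_mono_AE[OF isu iBc pw] by simp
  have "(\<lambda>k. (\<integral>x. B x \<partial>M) / (1 - w)^2 * r^k) \<longlonglongrightarrow> 0"
    using r by (intro tendsto_mult_right_zero LIMSEQ_power_zero) simp
  then have t0: "(\<lambda>k. (\<integral>x. B x \<partial>M) * c k) \<longlonglongrightarrow> 0" by (simp add: c_def)
  have conv: "(\<lambda>k. \<integral>x. (s k x - u x)^2 \<partial>M) \<longlonglongrightarrow> 0"
    by (rule tendsto_sandwich[OF _ _ tendsto_const t0]) (use le in auto)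
  have "u \<in> L2 M"
  proof -
    have "integrable M (\<lambda>x. 2 * (s 0 x)^2 + 2 * (s 0 x - u x)^2)"
      using isu[of 0] L2_sq[OF L[of 0]] by simp
    then have "integrable M (\<lambda>x. (u x)^2)"
    proof (rule Bochner_Integration.integrable_bound)
      show "(\<lambda>x. (u x)^2) \<in> borel_measurable M" by simp
      show "AE x in M. norm ((u x)^2) \<le> norm (2 * (s 0 x)^2 + 2 * (s 0 x - u x)^2)"
      proof (rule AE_I2)
        fix x have "0 \<le> (2 * s 0 x - u x)^2" by simp
        then show "norm ((u x)^2) \<le> norm (2 * (s 0 x)^2 + 2 * (s 0 x - u x)^2)"
          by (simp add: power2_eq_square algebra_simps)
      qed
    qed
    then show ?thesis by (simp add: L2_def)
  qed
  with conv show ?thesis by blast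
qed


context mrw begin

lemma lap_lin: assumes "f \<in> L2 \<nu>" "g \<in> L2 \<nu>"
  shows "AE x in \<nu>. laplacian m (\<lambda>x. a * f x + b * g x) x = a * laplacian m f x + b * laplacian m g x"
  using INV(1)[OF L2_int'[OF assms(1)]] INV(1)[OF L2_int'[OF assms(2)]]
proof eventually_elim
  case (elim x)
  interpret prob_space "m x" by (rule m_prob)
  have i1: "integrable (m x) (\<lambda>y. f y - f x)" using elim by simp
  have i2: "integrable (m x) (\<lambda>y. g y - g x)" using elim by simp
  have "laplacian m (\<lambda>x. a * f x + b * g x) x = (\<integral>y. a * (f y - f x) + b * (g y - g x) \<partial>m x)"
    unfolding laplacian_def by (rule Bochner_Integration.integral_cong) (auto simp: algebra_simps)
  also have "\<dots> = a * laplacian m f x + b * laplacian m g x"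
    using i1 i2 by (simp add: laplacian_def)
  finally show ?case .
qed

lemma ip3: assumes f: "f1 \<in> L2 \<nu>" "f2 \<in> L2 \<nu>" "f3 \<in> L2 \<nu>"
  and F: "\<And>x. F x = a1 * f1 x + a2 * f2 x + a3 * f3 x"
  and G: "\<And>x. G x = b1 * f1 x + b2 * f2 x + b3 * f3 x"
  shows "ip F G = a1*b1*ip f1 f1 + a1*b2*ip f1 f2 + a1*b3*ip f1 f3
    + a2*b1*ip f2 f1 + a2*b2*ip f2 f2 + a2*b3*ip f2 f3
    + a3*b1*ip f3 f1 + a3*b2*ip f3 f2 + a3*b3*ip f3 f3"
proof -
  have eq: "ip F G = (\<integral>x. a1*b1*(f1 x*f1 x) + a1*b2*(f1 x*f2 x) + a1*b3*(f1 x*f3 x)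
    + a2*b1*(f2 x*f1 x) + a2*b2*(f2 x*f2 x) + a2*b3*(f2 x*f3 x)
    + a3*b1*(f3 x*f1 x) + a3*b2*(f3 x*f2 x) + a3*b3*(f3 x*f3 x) \<partial>\<nu>)"
    unfolding ip_def F G by (rule Bochner_Integration.integral_cong) (auto simp: algebra_simps)
  show ?thesis
    unfolding eq
    using L2_prod[OF f(1) f(1)] L2_prod[OF f(1) f(2)] L2_prod[OF f(1) f(3)]
      L2_prod[OF f(2) f(1)] L2_prod[OF f(2) f(2)] L2_prod[OF f(2) f(3)]
      L2_prod[OF f(3) f(1)] L2_prod[OF f(3) f(2)] L2_prod[OF f(3) f(3)]
    by (simp add: ip_def)
qed

definition T :: "('a \<Rightarrow> real) \<Rightarrow> 'a \<Rightarrow> real" where "T h = (\<lambda>x. h x + 1/2 * laplacian m h x)"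

lemma T_L2: "h \<in> L2 \<nu> \<Longrightarrow> T h \<in> L2 \<nu>"
  unfolding T_def by (intro L2_add L2_cmult lap_L2)

lemma step:
  assumes C: "\<And>k. k \<in> L2 \<nu> \<Longrightarrow> lam * H_m m \<nu> k \<le> ip (laplacian m k) (laplacian m k)"
    and lam: "0 < lam" "lam < 2" and h: "h \<in> L2 \<nu>"
  shows "H_m m \<nu> (T h) - lam * ip (T h) (T h) \<le> H_m m \<nu> h - lam * ip h h"
    and "H_m m \<nu> (T h) \<le> (1 - lam/2)^2 * H_m m \<nu> h"
proof -
  define h1 where "h1 = laplacian m h"
  define h2 where "h2 = laplacian m h1"
  have L: "h1 \<in> L2 \<nu>" "h2 \<in> L2 \<nu>" using h by (auto simp: h1_def h2_def intro!: lap_L2)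
  have [measurable]: "h \<in> borel_measurable borel" "h1 \<in> borel_measurable borel" "h2 \<in> borel_measurable borel"
    using h L by (auto simp: L2_def)
  define M0 where "M0 = ip h h"
  define M1 where "M1 = ip h1 h"
  define M2 where "M2 = ip h1 h1"
  define M3 where "M3 = ip h2 h1"
  define M4 where "M4 = ip h2 h2"
  have M2': "ip h2 h = M2" unfolding M2_def h2_def using lap_sym[OF L(1) h] by (simp add: h1_def)
  note ipc = ip_comm
  have X: "ip F G = aa*ba*M0 + (aa*bb + ab*ba)*M1 + (aa*bc + ac*ba)*M2 + ab*bb*M2 + (ab*bc + ac*bb)*M3 + ac*bc*M4"
    if F: "\<And>x. F x = aa * h x + ab * h1 x + ac * h2 x" and G: "\<And>x. G x = ba * h x + bb * h1 x + bc * h2 x"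
    for F G aa ab ac ba bb bc
      using ip3[OF h L F G] ip_comm[of h h1] ip_comm[of h h2] ip_comm[of h1 h2] M2'
      by (simp add: M0_def M1_def M2_def M3_def M4_def algebra_simps)
  have Th: "T h = (\<lambda>x. h x + 1/2 * h1 x)" by (simp add: T_def h1_def)
  have ThL: "T h \<in> L2 \<nu>" by (rule T_L2[OF h])
  have lapTh: "AE x in \<nu>. laplacian m (T h) x = 1 * h1 x + 1/2 * h2 x"
    using lap_lin[OF h L(1), of 1 "1/2"] by (simp add: Th h2_def h1_def)
  have HTh: "H_m m \<nu> (T h) = - (M1 + M2 + 1/4 * M3)"
  proof -
    have "H_m m \<nu> (T h) = - ip (laplacian m (T h)) (T h)" by (rule H_lap[OF ThL])
    also have "ip (laplacian m (T h)) (T h) = ip (\<lambda>x. 1 * h1 x + 1/2 * h2 x) (T h)"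
      by (rule ip_cong) (use lapTh ThL L in \<open>auto simp: L2_def intro!: lap_meas\<close>)
    also have "\<dots> = M1 + M2 + 1/4 * M3" by (subst X[where aa=0 and ab=1 and ac="1/2" and ba=1 and bb="1/2" and bc=0]) (auto simp: Th)
    finally show ?thesis by simp
  qed
  have ipTh: "ip (T h) (T h) = M0 + M1 + 1/4 * M2"
    by (subst X[where aa=1 and ab="1/2" and ac=0 and ba=1 and bb="1/2" and bc=0]) (auto simp: Th)
  have Hh: "H_m m \<nu> h = - M1" using H_lap[OF h] by (simp add: M1_def h1_def)
  have Ch: "lam * (- M1) \<le> M2" using C[OF h] Hh by (simp add: M2_def h1_def)
  define k where "k = (\<lambda>x. 2 * h x + 1 * h1 x)"
  have kL: "k \<in> L2 \<nu>" unfolding k_def using h L by (intro L2_add L2_cmult)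
  have lapk: "AE x in \<nu>. laplacian m k x = 2 * h1 x + 1 * h2 x"
    using lap_lin[OF h L(1), of 2 1] by (simp add: k_def h2_def h1_def)
  have Ck: "lam * (- (4 * M1 + 4 * M2 + M3)) \<le> 4 * M2 + 4 * M3 + M4"
  proof -
    have e1: "ip (laplacian m k) (laplacian m k) = ip (\<lambda>x. 2 * h1 x + 1 * h2 x) (\<lambda>x. 2 * h1 x + 1 * h2 x)"
      by (rule ip_cong) (use lapk kL L in \<open>auto simp: L2_def intro!: lap_meas\<close>)
    have e2: "ip (laplacian m k) k = ip (\<lambda>x. 2 * h1 x + 1 * h2 x) k"
      by (rule ip_cong) (use lapk kL L in \<open>auto simp: L2_def intro!: lap_meas\<close>)
    have "ip (\<lambda>x. 2 * h1 x + 1 * h2 x) (\<lambda>x. 2 * h1 x + 1 * h2 x) = 4 * M2 + 4 * M3 + M4"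
      by (subst X[where aa=0 and ab=2 and ac=1 and ba=0 and bb=2 and bc=1]) auto
    moreover have "ip (\<lambda>x. 2 * h1 x + 1 * h2 x) k = 4 * M1 + 4 * M2 + M3"
      by (subst X[where aa=0 and ab=2 and ac=1 and ba=2 and bb=1 and bc=0]) (auto simp: k_def)
    ultimately show ?thesis using C[OF kL] H_lap[OF kL] e1 e2 by simp
  qed
  define k' where "k' = (\<lambda>x. (- lam) * h x + (-1) * h1 x)"
  have k'L: "k' \<in> L2 \<nu>" unfolding k'_def using h L by (intro L2_add L2_cmult)
  have lapk': "AE x in \<nu>. laplacian m k' x = (- lam) * h1 x + (-1) * h2 x"
    using lap_lin[OF h L(1), of "- lam" "-1"] by (simp add: k'_def h2_def h1_def)
  have Pk': "lam^2 * M2 + 2 * lam * M3 + M4 \<le> 2 * (- (lam^2 * M1 + 2 * lam * M2 + M3))"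
  proof -
    have e1: "ip (laplacian m k') (laplacian m k') = ip (\<lambda>x. (- lam) * h1 x + (-1) * h2 x) (\<lambda>x. (- lam) * h1 x + (-1) * h2 x)"
      by (rule ip_cong) (use lapk' k'L L in \<open>auto simp: L2_def intro!: lap_meas\<close>)
    have e2: "ip (laplacian m k') k' = ip (\<lambda>x. (- lam) * h1 x + (-1) * h2 x) k'"
      by (rule ip_cong) (use lapk' k'L L in \<open>auto simp: L2_def intro!: lap_meas\<close>)
    have "ip (\<lambda>x. (- lam) * h1 x + (-1) * h2 x) (\<lambda>x. (- lam) * h1 x + (-1) * h2 x) = lam^2 * M2 + 2 * lam * M3 + M4"
      by (subst X[where aa=0 and ab="- lam" and ac="-1" and ba=0 and bb="- lam" and bc="-1"]) (auto simp: power2_eq_square)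
    moreover have "ip (\<lambda>x. (- lam) * h1 x + (-1) * h2 x) k' = lam^2 * M1 + 2 * lam * M2 + M3"
      by (subst X[where aa=0 and ab="- lam" and ac="-1" and ba="- lam" and bb="-1" and bc=0]) (auto simp: k'_def power2_eq_square)
    ultimately show ?thesis using lap_sq_le[OF k'L] H_lap[OF k'L] e1 e2 by simp
  qed
  define s1 where "s1 = M2 + lam * M1"
  define s2 where "s2 = 4 * M2 + 4 * M3 + M4 + lam * (4 * M1 + 4 * M2 + M3)"
  define s3 where "s3 = 2 * (- (lam^2 * M1 + 2 * lam * M2 + M3)) - (lam^2 * M2 + 2 * lam * M3 + M4)"
  have s: "0 \<le> s1" "0 \<le> s2" "0 \<le> s3" using Ch Ck Pk' by (simp_all add: s1_def s2_def s3_def algebra_simps)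
  have lp: "0 < 2 - lam" using lam by simp
  have id1: "4 * (2 - lam) * ((H_m m \<nu> h - lam * ip h h) - (H_m m \<nu> (T h) - lam * ip (T h) (T h)))
      = 2 * (2 - lam) * s1 + s2 + s3"
    unfolding HTh ipTh Hh s1_def s2_def s3_def M0_def[symmetric] by (simp add: algebra_simps power2_eq_square)
  have "0 \<le> 4 * (2 - lam) * ((H_m m \<nu> h - lam * ip h h) - (H_m m \<nu> (T h) - lam * ip (T h) (T h)))"
    unfolding id1 using s lp by simp
  then show "H_m m \<nu> (T h) - lam * ip (T h) (T h) \<le> H_m m \<nu> h - lam * ip h h"
    using lp by (simp add: zero_le_mult_iff)
  have id2: "4 * (2 - lam) * ((1 - lam/2)^2 * H_m m \<nu> h - H_m m \<nu> (T h)) = (2 - lam)^2 * s1 + s2 + s3"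
    unfolding HTh Hh s1_def s2_def s3_def by (simp add: algebra_simps power2_eq_square)
  have "0 \<le> 4 * (2 - lam) * ((1 - lam/2)^2 * H_m m \<nu> h - H_m m \<nu> (T h))"
    unfolding id2 using s lp by simp
  then show "H_m m \<nu> (T h) \<le> (1 - lam/2)^2 * H_m m \<nu> h"
    using lp by (simp add: zero_le_mult_iff)
qed

end

context mrw begin

lemma nu_measure1[simp]: "measure \<nu> UNIV = 1"
  using prob_space.prob_space[OF prob] by simp

lemma int_T: "h \<in> L2 \<nu> \<Longrightarrow> (\<integral>x. T h x \<partial>\<nu>) = (\<integral>x. h x \<partial>\<nu>)"
  unfolding T_def using L2_int'[of h] lap_int[OF L2_int'[of h]] by simp

lemma Var_ip: "Var \<nu> f = ip (\<lambda>x. f x - (\<integral>z. f z \<partial>\<nu>)) (\<lambda>x. f x - (\<integral>z. f z \<partial>\<nu>))"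
  by (simp add: Var_def ip_def power2_eq_square)

lemma ibe_imp_poinc:
  assumes erg: "ergodic m \<nu>"
    and C: "\<And>k. k \<in> L2 \<nu> \<Longrightarrow> lam * H_m m \<nu> k \<le> ip (laplacian m k) (laplacian m k)"
    and lam: "0 < lam" "lam < 2" and f: "f \<in> L2 \<nu>"
  shows "lam * Var \<nu> f \<le> H_m m \<nu> f"
proof -
  interpret P: prob_space \<nu> by (rule prob)
  define c where "c = (\<integral>z. f z \<partial>\<nu>)"
  define g where "g = (\<lambda>x. f x - c)"
  have gL: "g \<in> L2 \<nu>" unfolding g_def by (intro L2_diff f L2_const finite_nu)
  have g0: "(\<integral>x. g x \<partial>\<nu>) = 0" unfolding g_def c_def using L2_int'[OF f] by (simp add: P.prob_space)
  have Vg: "Var \<nu> f = ip g g" by (simp add: Var_ip g_def c_def)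
  have Hg: "H_m m \<nu> f = H_m m \<nu> g" by (simp add: g_def H_shift)
  define gs where "gs k = (T ^^ k) g" for k
  have gsS: "gs (Suc k) = T (gs k)" for k by (simp add: gs_def)
  have gsL: "gs k \<in> L2 \<nu>" for k by (induction k) (auto simp: gs_def gL T_L2)
  have [measurable]: "gs k \<in> borel_measurable borel" for k using gsL[of k] by (simp add: L2_def)
  have gs0: "(\<integral>x. gs k x \<partial>\<nu>) = 0" for k
    by (induction k) (auto simp: gsS int_T gsL g0, simp add: gs_def g0)
  define \<rho> where "\<rho> = (1 - lam/2)^2"
  have a: "0 < 1 - lam/2" "1 - lam/2 < 1" using lam by auto
  have "(1 - lam/2)^2 < 1^2" by (rule power_strict_mono) (use a in auto)
  then have \<rho>: "0 < \<rho>" "\<rho> < 1" using a by (auto simp: \<rho>_def)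
  have phi: "H_m m \<nu> (gs k) - lam * ip (gs k) (gs k) \<le> H_m m \<nu> g - lam * ip g g" for k
  proof (induction k)
    case 0 then show ?case by (simp add: gs_def)
  next
    case (Suc k) then show ?case using step(1)[OF C lam gsL[of k]] by (simp add: gsS)
  qed
  have Hdec: "H_m m \<nu> (gs k) \<le> \<rho>^k * H_m m \<nu> g" for k
  proof (induction k)
    case 0 then show ?case by (simp add: gs_def)
  next
    case (Suc k)
    have "H_m m \<nu> (gs (Suc k)) \<le> \<rho> * H_m m \<nu> (gs k)"
      using step(2)[OF C lam gsL[of k]] by (simp add: gsS \<rho>_def)
    also have "\<dots> \<le> \<rho> * (\<rho>^k * H_m m \<nu> g)" using Suc \<rho> by (intro mult_left_mono) auto
    finally show ?case by (simp add: mult_ac)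
  qed
  have diff: "(\<integral>x. (gs (Suc k) x - gs k x)^2 \<partial>\<nu>) \<le> (1/2 * H_m m \<nu> g) * \<rho>^k" for k
  proof -
    have "(\<integral>x. (gs (Suc k) x - gs k x)^2 \<partial>\<nu>) = 1/4 * ip (laplacian m (gs k)) (laplacian m (gs k))"
      by (simp add: gsS T_def ip_def power2_eq_square)
    also have "\<dots> \<le> 1/4 * (2 * H_m m \<nu> (gs k))" using lap_sq_le[OF gsL[of k]] by simp
    also have "\<dots> \<le> 1/2 * (\<rho>^k * H_m m \<nu> g)" using Hdec[of k] by simp
    finally show ?thesis by (simp add: mult_ac)
  qed
  obtain u where uL: "u \<in> L2 \<nu>" and conv: "(\<lambda>k. \<integral>x. (gs k x - u x)^2 \<partial>\<nu>) \<longlonglongrightarrow> 0"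
    using L2_limit[OF gsL \<rho> diff] by blast
  have [measurable]: "u \<in> borel_measurable borel" using uL by (simp add: L2_def)
  define d where "d k = (\<integral>x. (gs k x - u x)^2 \<partial>\<nu>)" for k
  have dL: "(\<lambda>x. u x - gs k x) \<in> L2 \<nu>" for k by (rule L2_diff[OF uL gsL])
  have d_ip: "ip (\<lambda>x. u x - gs k x) (\<lambda>x. u x - gs k x) = d k" for k
    by (simp add: ip_def d_def power2_eq_square algebra_simps)
  have u0: "(\<integral>x. u x \<partial>\<nu>) = 0"
  proof -
    have "(\<integral>x. u x \<partial>\<nu>)^2 \<le> d k" for k
    proof -
      have "(\<integral>x. u x - gs k x \<partial>\<nu>)^2 \<le> (\<integral>x. (u x - gs k x)^2 \<partial>\<nu>)"
        by (rule jensen_sq[OF prob L2_int'[OF dL] L2_sq[OF dL]])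
      moreover have "(\<integral>x. u x - gs k x \<partial>\<nu>) = (\<integral>x. u x \<partial>\<nu>)"
        using L2_int'[OF uL] L2_int'[OF gsL] gs0[of k] by simp
      moreover have "(\<integral>x. (u x - gs k x)^2 \<partial>\<nu>) = d k"
        by (simp add: d_def power2_commute)
      ultimately show ?thesis by simp
    qed
    then have "(\<integral>x. u x \<partial>\<nu>)^2 \<le> 0" using LIMSEQ_le_const[OF conv[folded d_def]] by blast
    then show ?thesis by simp
  qed
  have Hu: "H_m m \<nu> u = 0"
  proof -
    have b: "H_m m \<nu> u \<le> 2 * (\<rho>^k * H_m m \<nu> g) + 4 * d k" for k
    proof -
      have "H_m m \<nu> u \<le> 2 * H_m m \<nu> (gs k) + 2 * H_m m \<nu> (\<lambda>x. u x - gs k x)" by (rule H_quad[OF uL gsL])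
      also have "H_m m \<nu> (\<lambda>x. u x - gs k x) \<le> 2 * d k" using H_le[OF dL[of k]] d_ip[of k] by simp
      finally show ?thesis using Hdec[of k] by simp
    qed
    have "(\<lambda>k. 2 * (\<rho>^k * H_m m \<nu> g) + 4 * d k) \<longlonglongrightarrow> 2 * (0 * H_m m \<nu> g) + 4 * 0"
      using \<rho> conv[folded d_def] by (intro tendsto_intros LIMSEQ_power_zero) auto
    then have "H_m m \<nu> u \<le> 0" using LIMSEQ_le_const[of _ 0 "H_m m \<nu> u"] b by force
    then show ?thesis using H_nonneg[OF uL] by simp
  qed
  have "AE x in \<nu>. laplacian m u x = 0" by (rule H_zero[OF uL Hu])
  then obtain c' where c': "AE x in \<nu>. u x = c'" using erg uL unfolding ergodic_def by blast
  have "(\<integral>x. u x \<partial>\<nu>) = (\<integral>x. c' \<partial>\<nu>)" by (rule integral_cong_AE) (use c' in auto)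
  then have "c' = 0" using u0 by (simp add: P.prob_space)
  then have uz: "AE x in \<nu>. u x = 0" using c' by simp
  have gsd: "ip (gs k) (gs k) = d k" for k
    unfolding ip_def d_def by (rule integral_cong_AE) (use uz in \<open>auto simp: power2_eq_square\<close>)
  have low: "- lam * d k \<le> H_m m \<nu> g - lam * ip g g" for k
    using phi[of k] H_nonneg[OF gsL[of k]] gsd[of k] by simp
  have "(\<lambda>k. - lam * d k) \<longlonglongrightarrow> - lam * 0" using conv[folded d_def] by (intro tendsto_intros)
  then have "- lam * 0 \<le> H_m m \<nu> g - lam * ip g g" using LIMSEQ_le_const2 low by blast
  then show ?thesis using Vg Hg by simp
qed

end

context mrw begin

lemma ip_sq_nonneg: "0 \<le> ip f f" unfolding ip_def by simp

lemma poinc_imp_ibe: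
  assumes P: "poincare m \<nu> lam" and lam: "0 \<le> lam" and f: "f \<in> L2 \<nu>"
  shows "lam * H_m m \<nu> f \<le> ip (laplacian m f) (laplacian m f)"
proof -
  define c where "c = (\<integral>z. f z \<partial>\<nu>)"
  define g where "g = (\<lambda>x. f x - c)"
  have gL: "g \<in> L2 \<nu>" unfolding g_def by (intro L2_diff f L2_const finite_nu)
  have Vg: "Var \<nu> f = ip g g" by (simp add: Var_ip g_def c_def)
  have Hg: "H_m m \<nu> f = H_m m \<nu> g" by (simp add: g_def H_shift)
  have Lg: "laplacian m f = laplacian m g" by (simp add: g_def lap_shift)
  define g1 where "g1 = laplacian m g"
  have g1L: "g1 \<in> L2 \<nu>" unfolding g1_def by (rule lap_L2[OF gL])
  have Hg1: "H_m m \<nu> g = - ip g1 g" unfolding g1_def by (rule H_lap[OF gL])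
  have "ip (\<lambda>x. 1 * g1 x + lam * g x + 0 * g x) (\<lambda>x. 1 * g1 x + lam * g x + 0 * g x)
      = ip g1 g1 + 2 * lam * ip g1 g + lam^2 * ip g g"
    using ip3[OF g1L gL gL, of "\<lambda>x. 1 * g1 x + lam * g x + 0 * g x" 1 lam 0
        "\<lambda>x. 1 * g1 x + lam * g x + 0 * g x" 1 lam 0] ip_comm[of g g1]
    by (simp add: power2_eq_square algebra_simps)
  then have sq: "0 \<le> ip g1 g1 + 2 * lam * ip g1 g + lam^2 * ip g g"
    using ip_sq_nonneg[of "\<lambda>x. 1 * g1 x + lam * g x + 0 * g x"] by simp
  have "lam * ip g g \<le> - ip g1 g" using P gL f unfolding poincare_def using Vg Hg Hg1 by auto
  then have "lam * (lam * ip g g) \<le> lam * (- ip g1 g)" using lam by (rule mult_left_mono)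
  then have "lam * (- ip g1 g) \<le> ip g1 g1" using sq by (simp add: power2_eq_square algebra_simps)
  then show ?thesis using Hg Hg1 Lg g1_def by simp
qed

lemma ibe_iff_poinc:
  assumes erg: "ergodic m \<nu>" and lam: "0 < lam"
  shows "(\<forall>f\<in>L2 \<nu>. lam * H_m m \<nu> f \<le> (\<integral>x. (laplacian m f x)^2 \<partial>\<nu>)) \<longleftrightarrow> poincare m \<nu> lam"
proof -
  have eq: "(\<integral>x. (laplacian m f x)^2 \<partial>\<nu>) = ip (laplacian m f) (laplacian m f)" for f
    by (simp add: ip_def power2_eq_square)
  show ?thesis
  proof
    assume "poincare m \<nu> lam"
    then show "\<forall>f\<in>L2 \<nu>. lam * H_m m \<nu> f \<le> (\<integral>x. (laplacian m f x)^2 \<partial>\<nu>)"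
      using poinc_imp_ibe lam by (simp add: eq)
  next
    assume A: "\<forall>f\<in>L2 \<nu>. lam * H_m m \<nu> f \<le> (\<integral>x. (laplacian m f x)^2 \<partial>\<nu>)"
    then have C: "\<And>k. k \<in> L2 \<nu> \<Longrightarrow> lam * H_m m \<nu> k \<le> ip (laplacian m k) (laplacian m k)"
      by (simp add: eq)
    have small: "l * Var \<nu> f \<le> H_m m \<nu> f" if l: "0 < l" "l < 2" "l \<le> lam" and f: "f \<in> L2 \<nu>" for l f
    proof (rule ibe_imp_poinc[OF erg _ l(1,2) f])
      fix k assume k: "k \<in> L2 \<nu>"
      have "l * H_m m \<nu> k \<le> lam * H_m m \<nu> k" using l H_nonneg[OF k] by (intro mult_right_mono) auto
      also have "\<dots> \<le> ip (laplacian m k) (laplacian m k)" by (rule C[OF k])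
      finally show "l * H_m m \<nu> k \<le> ip (laplacian m k) (laplacian m k)" .
    qed
    show "poincare m \<nu> lam" unfolding poincare_def
    proof
      fix f assume f: "f \<in> L2 \<nu>"
      have V0: "0 \<le> Var \<nu> f" unfolding Var_def by simp
      have H0: "0 \<le> H_m m \<nu> f" by (rule H_nonneg[OF f])
      show "lam * Var \<nu> f \<le> H_m m \<nu> f"
      proof (cases "lam < 2")
        case True then show ?thesis using small[OF lam True order_refl f] by simp
      next
        case False
        have two: "2 * Var \<nu> f \<le> H_m m \<nu> f"
        proof (rule ccontr)
          assume c: "\<not> 2 * Var \<nu> f \<le> H_m m \<nu> f"
          then have Vp: "0 < Var \<nu> f" using H0 V0 by linarith
          define l where "l = (2 + H_m m \<nu> f / Var \<nu> f) / 2"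
          have "H_m m \<nu> f / Var \<nu> f < 2" using c Vp by (simp add: divide_less_eq)
          moreover have "0 \<le> H_m m \<nu> f / Var \<nu> f" using H0 Vp by simp
          ultimately have l: "0 < l" "l < 2" "l \<le> lam" using False by (auto simp: l_def)
          have "l * Var \<nu> f = Var \<nu> f + H_m m \<nu> f / 2" using Vp by (simp add: l_def field_simps)
          then show False using small[OF l f] c by linarith
        qed
        have "lam * H_m m \<nu> f \<le> 2 * H_m m \<nu> f" using C[OF f] lap_sq_le[OF f] by simp
        then have "(lam - 2) * H_m m \<nu> f \<le> 0" by (simp add: algebra_simps)
        then have "lam = 2 \<or> H_m m \<nu> f = 0" using False H0 by (smt (verit) mult_pos_pos)
        then show ?thesis
        proof
          assume "lam = 2" then show ?thesis using two by simp
        next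
          assume "H_m m \<nu> f = 0" then have "Var \<nu> f = 0" using two V0 by simp
          then show ?thesis using H0 by simp
        qed
      qed
    qed
  qed
qed

lemma poinc_gap: assumes "poincare m \<nu> lam" shows "ereal lam \<le> gap m \<nu>"
  unfolding gap_def
proof (rule INF_greatest)
  fix f assume "f \<in> {f \<in> L2 \<nu>. Var \<nu> f \<noteq> 0}"
  then have f: "f \<in> L2 \<nu>" "Var \<nu> f \<noteq> 0" by auto
  have "0 \<le> Var \<nu> f" unfolding Var_def by simp
  then have Vp: "0 < Var \<nu> f" using f by simp
  have "lam * Var \<nu> f \<le> H_m m \<nu> f" using assms f unfolding poincare_def by auto
  then have "lam \<le> H_m m \<nu> f / Var \<nu> f" using Vp by (simp add: le_divide_eq)
  then show "ereal lam \<le> ereal (H_m m \<nu> f / Var \<nu> f)" by simp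
qed

end

context mrw begin

lemma Gamma_int: assumes f: "f \<in> L2 \<nu>"
  shows "integrable \<nu> (Gamma m f f)" and "(\<integral>x. Gamma m f f x \<partial>\<nu>) = H_m m \<nu> f"
proof -
  define g1 where "g1 = laplacian m f"
  have g1L: "g1 \<in> L2 \<nu>" unfolding g1_def by (rule lap_L2[OF f])
  have i1: "integrable \<nu> (\<lambda>z. f z * f z)" by (rule L2_prod[OF f f])
  have i2: "integrable \<nu> (\<lambda>x. f x * g1 x)" by (rule L2_prod[OF f g1L])
  have eq: "Gamma m f f = (\<lambda>x. 1/2 * (laplacian m (\<lambda>z. f z * f z) x - f x * g1 x - f x * g1 x))"
    by (simp add: Gamma_def[abs_def] g1_def)
  show "integrable \<nu> (Gamma m f f)" unfolding eq using lap_int(1)[OF i1] i2 by simp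
  have "(\<integral>x. Gamma m f f x \<partial>\<nu>) = 1/2 * (0 - ip f g1 - ip f g1)"
    unfolding eq using lap_int[OF i1] i2 by (simp add: ip_def)
  also have "\<dots> = H_m m \<nu> f" using H_lap[OF f] ip_comm[of f g1] by (simp add: g1_def)
  finally show "(\<integral>x. Gamma m f f x \<partial>\<nu>) = H_m m \<nu> f" .
qed

lemma Gamma2_int: assumes f: "f \<in> L2 \<nu>"
  shows "integrable \<nu> (Gamma2 m f)"
    and "(\<integral>x. Gamma2 m f x \<partial>\<nu>) = ip (laplacian m f) (laplacian m f)"
proof -
  define g1 where "g1 = laplacian m f"
  define g2 where "g2 = laplacian m g1"
  have g1L: "g1 \<in> L2 \<nu>" unfolding g1_def by (rule lap_L2[OF f])
  have g2L: "g2 \<in> L2 \<nu>" unfolding g2_def by (rule lap_L2[OF g1L])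
  have iG: "integrable \<nu> (Gamma m f f)" by (rule Gamma_int(1)[OF f])
  have i2: "integrable \<nu> (\<lambda>z. f z * g1 z)" by (rule L2_prod[OF f g1L])
  have i3: "integrable \<nu> (\<lambda>x. f x * g2 x)" by (rule L2_prod[OF f g2L])
  have i4: "integrable \<nu> (\<lambda>x. g1 x * g1 x)" by (rule L2_prod[OF g1L g1L])
  have eq: "Gamma2 m f = (\<lambda>x. 1/2 * laplacian m (Gamma m f f) x
      - 1/2 * (laplacian m (\<lambda>z. f z * g1 z) x - f x * g2 x - g1 x * g1 x))"
    by (rule ext) (simp add: Gamma2_def Gamma_def g1_def g2_def)
  show "integrable \<nu> (Gamma2 m f)" unfolding eq using lap_int(1)[OF iG] lap_int(1)[OF i2] i3 i4 by simp
  have "(\<integral>x. Gamma2 m f x \<partial>\<nu>) = 1/2 * 0 - 1/2 * (0 - ip f g2 - ip g1 g1)"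
    unfolding eq using lap_int[OF iG] lap_int[OF i2] i3 i4 by (simp add: ip_def)
  also have "ip f g2 = ip g1 g1" using lap_sym[OF f g1L] by (simp add: g1_def g2_def)
  finally show "(\<integral>x. Gamma2 m f x \<partial>\<nu>) = ip (laplacian m f) (laplacian m f)" by (simp add: g1_def)
qed

lemma be_imp_ibe: assumes BE: "BE m \<nu> K n" and n: "1 < n" shows "IBE m \<nu> K n"
  unfolding IBE_def
proof
  fix f assume f: "f \<in> L2 \<nu>"
  define g1 where "g1 = laplacian m f"
  have g1L: "g1 \<in> L2 \<nu>" unfolding g1_def by (rule lap_L2[OF f])
  have AE: "AE x in \<nu>. 1/n * (g1 x)^2 + K * Gamma m f f x \<le> Gamma2 m f x"
    using BE f unfolding BE_def g1_def by auto
  have i: "integrable \<nu> (\<lambda>x. 1/n * (g1 x)^2 + K * Gamma m f f x)"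
    using L2_sq[OF g1L] Gamma_int(1)[OF f] by simp
  have "(\<integral>x. 1/n * (g1 x)^2 + K * Gamma m f f x \<partial>\<nu>) \<le> (\<integral>x. Gamma2 m f x \<partial>\<nu>)"
    by (rule integral_mono_AE[OF i Gamma2_int(1)[OF f] AE])
  also have "(\<integral>x. 1/n * (g1 x)^2 + K * Gamma m f f x \<partial>\<nu>) = 1/n * ip g1 g1 + K * H_m m \<nu> f"
    using L2_sq[OF g1L] Gamma_int[OF f] by (simp add: ip_def power2_eq_square)
  also have "(\<integral>x. Gamma2 m f x \<partial>\<nu>) = ip g1 g1" using Gamma2_int(2)[OF f] by (simp add: g1_def)
  finally have *: "K * H_m m \<nu> f \<le> (1 - 1/n) * ip g1 g1" by (simp add: algebra_simps)
  have np: "0 < n / (n - 1)" using n by simp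
  have "K * (n / (n - 1)) * H_m m \<nu> f = (n / (n - 1)) * (K * H_m m \<nu> f)" by simp
  also have "\<dots> \<le> (n / (n - 1)) * ((1 - 1/n) * ip g1 g1)" using * np by (intro mult_left_mono) auto
  also have "\<dots> = ip g1 g1" using n by (simp add: field_simps)
  finally show "K * (n / (n - 1)) * H_m m \<nu> f \<le> (\<integral>x. (laplacian m f x)^2 \<partial>\<nu>)"
    by (simp add: g1_def ip_def power2_eq_square)
qed

lemma be_inf_imp_ibe_inf: assumes BE: "BE_inf m \<nu> K" shows "IBE_inf m \<nu> K"
  unfolding IBE_inf_def
proof
  fix f assume f: "f \<in> L2 \<nu>"
  have AE: "AE x in \<nu>. K * Gamma m f f x \<le> Gamma2 m f x" using BE f unfolding BE_inf_def by auto
  have "(\<integral>x. K * Gamma m f f x \<partial>\<nu>) \<le> (\<integral>x. Gamma2 m f x \<partial>\<nu>)"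
    by (rule integral_mono_AE[OF _ Gamma2_int(1)[OF f] AE]) (use Gamma_int(1)[OF f] in simp)
  then show "K * H_m m \<nu> f \<le> (\<integral>x. (laplacian m f x)^2 \<partial>\<nu>)"
    using Gamma_int(2)[OF f] Gamma2_int(2)[OF f] by (simp add: ip_def power2_eq_square)
qed

end

theorem theorem3p18:
  fixes m :: "'a::polish_space \<Rightarrow> 'a measure" and \<nu> :: "'a measure"
  assumes "mrw_space m"
    and "prob_space \<nu>" and "sets \<nu> = sets borel"
    and "invariant_measure m \<nu>" and "reversible_measure m \<nu>"
    and "ergodic m \<nu>"
  shows "(\<forall>K n. K > 0 \<longrightarrow> n > 1 \<longrightarrow> (IBE m \<nu> K n \<longleftrightarrow> poincare m \<nu> (K * (n / (n - 1)))))
       \<and> (\<forall>K. K > 0 \<longrightarrow> (IBE_inf m \<nu> K \<longleftrightarrow> poincare m \<nu> K))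
       \<and> (\<forall>K n. K > 0 \<longrightarrow> n > 1 \<longrightarrow> BE m \<nu> K n \<longrightarrow> gap m \<nu> \<ge> ereal (K * (n / (n - 1))))
       \<and> (\<forall>K. K > 0 \<longrightarrow> BE_inf m \<nu> K \<longrightarrow> gap m \<nu> \<ge> ereal K)"
proof -
  interpret mrw m \<nu> by (rule mrw.intro) (rule assms)+
  have erg: "ergodic m \<nu>" by (rule assms(6))
  have one: "IBE m \<nu> K n \<longleftrightarrow> poincare m \<nu> (K * (n / (n - 1)))" if K: "K > 0" and n: "n > 1" for K n :: real
  proof -
    have "0 < K * (n / (n - 1))" using K n by simp
    then show ?thesis unfolding IBE_def using ibe_iff_poinc[OF erg] by blast
  qed
  have two: "IBE_inf m \<nu> K \<longleftrightarrow> poincare m \<nu> K" if K: "K > 0" for K :: real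
    unfolding IBE_inf_def using ibe_iff_poinc[OF erg K] by blast
  show ?thesis
  proof (intro conjI allI impI)
    fix K n :: real assume "K > 0" "n > 1"
    then show "IBE m \<nu> K n \<longleftrightarrow> poincare m \<nu> (K * (n / (n - 1)))" by (rule one)
  next
    fix K :: real assume "K > 0"
    then show "IBE_inf m \<nu> K \<longleftrightarrow> poincare m \<nu> K" by (rule two)
  next
    fix K n :: real assume K: "K > 0" and n: "n > 1" and B: "BE m \<nu> K n"
    have "IBE m \<nu> K n" by (rule be_imp_ibe[OF B n])
    then have "poincare m \<nu> (K * (n / (n - 1)))" using one[OF K n] by simp
    then show "gap m \<nu> \<ge> ereal (K * (n / (n - 1)))" by (rule poinc_gap)
  next
    fix K :: real assume K: "K > 0" and B: "BE_inf m \<nu> K"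
    have "IBE_inf m \<nu> K" by (rule be_inf_imp_ibe_inf[OF B])
    then have "poincare m \<nu> K" using two[OF K] by simp
    then show "gap m \<nu> \<ge> ereal K" by (rule poinc_gap)
  qed
qed

end
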